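(* For $\omega\in\mathbb{T}$ and $\upsilon\in\operatorname{Aut}\mathbb{D}$, written $\upsilon(\lambda)=\eta\frac{\lambda-\alpha}{1-\bar\alpha\lambda}$ with $\eta\in\mathbb{T}$, $\alpha\in\mathbb{D}$, define $$f_{\omega\upsilon}(a,s,p)=\left(\frac{\omega\eta(1-|\alpha|^2)a}{1-\bar\alpha s+\bar\alpha^2p},\ \tau_\upsilon(s,p)\right),$$ where $\tau_\upsilon(\lambda_1+\lambda_2,\lambda_1\lambda_2)=(\upsilon(\lambda_1)+\upsilon(\lambda_2),\upsilon(\lambda_1)\upsilon(\lambda_2))$ for $\lambda_1,\lambda_2\in\mathbb{D}$; explicitly $$f_{\omega\upsilon}(a,s,p)=\frac{\eta}{1-\bar\alpha s+\bar\alpha^2p}\Big(\omega(1-|\alpha|^2)a,\ -2\alpha+(1+|\alpha|^2)s-2\bar\alpha p,\ \eta(\alpha^2-\alpha s+p)\Big).$$ Then each $f_{\omega\upsilon}$ is an automorphism of $\mathcal{P}$ (a bijective holomorphic self-map with holomorphic inverse) which extends analytically to a neighbourhood of $\overline{\mathcal{P}}$; for all $\omega_1,\omega_2\in\mathbb{T}$ and $\upsilon_1,\upsilon_2\in\operatorname{Aut}\mathbb{D}$, $f_{\omega_1\upsilon_1}\circ f_{\omega_2\upsilon_2}=f_{(\omega_1\omega_2)(\upsilon_1\circ\upsilon_2)}$, and $(f_{\omega\upsilon})^{-1}=f_{\bar\omega\upsilon^{-1}}$. Consequently $\{f_{\omega\upsilon}:\omega\in\mathbb{T},\upsilon\in\operatorname{Aut}\mathbb{D}\}$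 is a group of automorphisms of $\mathcal{P}$ under composition.
   Context: $\mathbb{D}$ is the open unit disc, $\mathbb{T}$ the unit circle, $\operatorname{Aut}\mathbb{D}$ the group of Möbius automorphisms of $\mathbb{D}$. $\mathbb{B}$ is the open unit ball of $\mathbb{C}^{2\times 2}$ (operator norm), $\pi(A)=(a_{21},\operatorname{tr}A,\det A)$, $\mathcal{P}=\pi(\mathbb{B})$, $\overline{\mathcal{P}}$ its closure. Every $(s,p)$ with $(a,s,p)\in\mathcal{P}$ is of the form $(\lambda_1+\lambda_2,\lambda_1\lambda_2)$ with $\lambda_1,\lambda_2\in\mathbb{D}$. *)

theory Defs
  imports "HOL-Analysis.Analysis"
begin

type_synonym c3 = "complex \<times> complex \<times> complex"

definition smul3 :: "complex \<Rightarrow> c3 \<Rightarrow> c3" where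
  "smul3 c v = (c * fst v, c * fst (snd v), c * snd (snd v))"

definition holo3_on :: "c3 set \<Rightarrow> (c3 \<Rightarrow> c3) \<Rightarrow> bool" where
  "holo3_on S f \<longleftrightarrow> (\<forall>x\<in>S. \<exists>D. (f has_derivative D) (at x) \<and>
                          (\<forall>c v. D (smul3 c v) = smul3 c (D v)))"

definition matball :: "(complex^2^2) set" where
  "matball = {A. onorm (\<lambda>x::complex^2. A *v x) < 1}"

definition piA :: "complex^2^2 \<Rightarrow> c3" where
  "piA A = (A$2$1, A$1$1 + A$2$2, det A)"

definition pentablock :: "c3 set" where
  "pentablock = piA ` matball"

definition moeb :: "complex \<Rightarrow> complex \<Rightarrow> complex \<Rightarrow> complex" where
  "moeb \<eta> \<alpha> z = \<eta> * (z - \<alpha>) / (1 - cnj \<alpha> * z)"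

definition autD_param :: "complex \<Rightarrow> complex \<Rightarrow> bool" where
  "autD_param \<eta> \<alpha> \<longleftrightarrow> norm \<eta> = 1 \<and> norm \<alpha> < 1"

text \<open>f_{omega upsilon} where upsilon = moeb eta alpha (explicit formula of the paper).\<close>
definition fmap :: "complex \<Rightarrow> complex \<Rightarrow> complex \<Rightarrow> c3 \<Rightarrow> c3" where
  "fmap \<omega> \<eta> \<alpha> (x::c3) = (let a = fst x; s = fst (snd x); p = snd (snd x);
      d = 1 - cnj \<alpha> * s + (cnj \<alpha>)^2 * p in
      (\<eta> / d * (\<omega> * (1 - complex_of_real ((norm \<alpha>)^2)) * a),
       \<eta> / d * (- 2 * \<alpha> + (1 + complex_of_real ((norm \<alpha>)^2)) * s - 2 * cnj \<alpha> * p),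
       \<eta> / d * (\<eta> * (\<alpha>^2 - \<alpha> * s + p))))"

definition is_aut3 :: "c3 set \<Rightarrow> (c3 \<Rightarrow> c3) \<Rightarrow> bool" where
  "is_aut3 P f \<longleftrightarrow> bij_betw f P P \<and> holo3_on P f \<and> holo3_on P (inv_into P f)"

end

theory Submission
  imports Defs
begin


lemma cn2: "complex_of_real (cmod z ^ 2) = z * cnj z" by (rule complex_norm_square)

lemma unit_cnj: "cmod \<eta> = 1 \<Longrightarrow> \<eta> * cnj \<eta> = 1"
  by (metis cn2 of_real_1 power_one)

lemma disc_denom: "cmod \<alpha> < 1 \<Longrightarrow> cmod z \<le> 1 \<Longrightarrow> 1 - cnj \<alpha> * z \<noteq> 0"
proof
  assume a: "cmod \<alpha> < 1" "cmod z \<le> 1" "1 - cnj \<alpha> * z = 0"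
  then have "cnj \<alpha> * z = 1" by simp
  then have "cmod \<alpha> * cmod z = 1" by (metis complex_mod_cnj norm_mult norm_one)
  moreover have "cmod \<alpha> * cmod z < 1"
    using a by (metis le_less_trans mult_left_le norm_ge_zero)
  ultimately show False by simp
qed

lemma disc_lower: "cmod \<alpha> < 1 \<Longrightarrow> cmod z \<le> 1 \<Longrightarrow> cmod (1 - cnj \<alpha> * z) \<ge> 1 - cmod \<alpha>"
proof -
  assume a: "cmod \<alpha> < 1" "cmod z \<le> 1"
  have "cmod (cnj \<alpha> * z) \<le> cmod \<alpha>"
    using a by (simp add: norm_mult mult_left_le)
  moreover have "cmod (1::complex) - cmod (cnj \<alpha> * z) \<le> cmod (1 - cnj \<alpha> * z)"
    by (rule norm_triangle_ineq2)
  ultimately show ?thesis by simp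
qed

lemma schwarz_id: "cmod (1 - cnj \<alpha> * z)^2 - cmod (z - \<alpha>)^2 = (1 - cmod \<alpha>^2) * (1 - cmod z^2)"
proof -
  have "complex_of_real (cmod (1 - cnj \<alpha> * z)^2 - cmod (z - \<alpha>)^2) = complex_of_real ((1 - cmod \<alpha>^2) * (1 - cmod z^2))"
    unfolding of_real_diff of_real_mult cn2 of_real_1 by (simp add: algebra_simps)
  then show ?thesis by (simp only: of_real_eq_iff)
qed

lemma moeb_less: "cmod \<alpha> < 1 \<Longrightarrow> cmod z < 1 \<Longrightarrow> cmod (z - \<alpha>) < cmod (1 - cnj \<alpha> * z)"
proof -
  assume a: "cmod \<alpha> < 1" "cmod z < 1"
  have "cmod \<alpha>^2 < 1" "cmod z^2 < 1" using a by (simp_all add: power_less_one_iff)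
  then have "(1 - cmod \<alpha>^2) * (1 - cmod z^2) > 0" by simp
  then have "cmod (z - \<alpha>)^2 < cmod (1 - cnj \<alpha> * z)^2" using schwarz_id[of \<alpha> z] by linarith
  then show ?thesis using power_less_imp_less_base by fastforce
qed

lemma moeb_in: "autD_param \<eta> \<alpha> \<Longrightarrow> cmod z < 1 \<Longrightarrow> cmod (moeb \<eta> \<alpha> z) < 1"
proof -
  assume a: "autD_param \<eta> \<alpha>" "cmod z < 1"
  then have d: "1 - cnj \<alpha> * z \<noteq> 0" using disc_denom[of \<alpha> z] by (simp add: autD_param_def)
  have "cmod (moeb \<eta> \<alpha> z) = cmod (z - \<alpha>) / cmod (1 - cnj \<alpha> * z)"
    using a by (simp add: moeb_def autD_param_def norm_mult norm_divide)
  also have "\<dots> < 1" using moeb_less[of \<alpha> z] a d by (simp add: autD_param_def)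
  finally show ?thesis .
qed

definition eta3 :: "complex \<Rightarrow> complex \<Rightarrow> complex \<Rightarrow> complex \<Rightarrow> complex" where
  "eta3 \<eta>1 \<alpha>1 \<eta>2 \<alpha>2 = \<eta>1 * (\<eta>2 + \<alpha>1 * cnj \<alpha>2) / (1 + cnj \<alpha>1 * \<eta>2 * \<alpha>2)"
definition alpha3 :: "complex \<Rightarrow> complex \<Rightarrow> complex \<Rightarrow> complex \<Rightarrow> complex" where
  "alpha3 \<eta>1 \<alpha>1 \<eta>2 \<alpha>2 = (\<eta>2 * \<alpha>2 + \<alpha>1) / (\<eta>2 + \<alpha>1 * cnj \<alpha>2)"

lemma c3_nz: "autD_param \<eta>1 \<alpha>1 \<Longrightarrow> autD_param \<eta>2 \<alpha>2 \<Longrightarrow> 1 + cnj \<alpha>1 * \<eta>2 * \<alpha>2 \<noteq> 0"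
  using disc_denom[of \<alpha>1 "- \<eta>2 * \<alpha>2"]
  by (auto simp: autD_param_def norm_mult algebra_simps)

lemma c3_eq: "autD_param \<eta>2 \<alpha>2 \<Longrightarrow> \<eta>2 + \<alpha>1 * cnj \<alpha>2 = \<eta>2 * cnj (1 + cnj \<alpha>1 * \<eta>2 * \<alpha>2)"
  using unit_cnj[of \<eta>2] by (simp add: autD_param_def algebra_simps)

lemma c3_nz2: "autD_param \<eta>1 \<alpha>1 \<Longrightarrow> autD_param \<eta>2 \<alpha>2 \<Longrightarrow> \<eta>2 + \<alpha>1 * cnj \<alpha>2 \<noteq> 0"
proof
  assume a: "autD_param \<eta>1 \<alpha>1" "autD_param \<eta>2 \<alpha>2" "\<eta>2 + \<alpha>1 * cnj \<alpha>2 = 0"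
  then have "\<eta>2 * cnj (1 + cnj \<alpha>1 * \<eta>2 * \<alpha>2) = 0" using c3_eq[of \<eta>2 \<alpha>2 \<alpha>1] by simp
  moreover have "\<eta>2 \<noteq> 0" using a by (auto simp: autD_param_def)
  ultimately have "cnj (1 + cnj \<alpha>1 * \<eta>2 * \<alpha>2) = 0" by simp
  then have "1 + cnj \<alpha>1 * \<eta>2 * \<alpha>2 = 0" by (simp only: complex_cnj_zero_iff)
  then show False using c3_nz[OF a(1,2)] by simp
qed

lemma alpha3_moeb: "autD_param \<eta>1 \<alpha>1 \<Longrightarrow> autD_param \<eta>2 \<alpha>2 \<Longrightarrow>
   alpha3 \<eta>1 \<alpha>1 \<eta>2 \<alpha>2 = moeb (cnj \<eta>2) (- \<eta>2 * \<alpha>2) \<alpha>1"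
proof -
  assume a: "autD_param \<eta>1 \<alpha>1" "autD_param \<eta>2 \<alpha>2"
  have u: "\<eta>2 * cnj \<eta>2 = 1" using a unit_cnj by (auto simp: autD_param_def)
  have n: "\<eta>2 + \<alpha>1 * cnj \<alpha>2 \<noteq> 0" using c3_nz2 a by blast
  have n2: "1 + \<alpha>1 * cnj \<alpha>2 * cnj \<eta>2 \<noteq> 0"
  proof
    assume "1 + \<alpha>1 * cnj \<alpha>2 * cnj \<eta>2 = 0"
    then have "\<eta>2 * (1 + \<alpha>1 * cnj \<alpha>2 * cnj \<eta>2) = 0" by simp
    moreover have "\<eta>2 * (1 + \<alpha>1 * cnj \<alpha>2 * cnj \<eta>2) = \<eta>2 + \<alpha>1 * cnj \<alpha>2 * (\<eta>2 * cnj \<eta>2)"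
      by (simp add: algebra_simps)
    ultimately have "\<eta>2 + \<alpha>1 * cnj \<alpha>2 = 0" using u by simp
    then show False using n by simp
  qed
  show ?thesis unfolding alpha3_def moeb_def using n n2 u
    by (simp add: field_simps)
qed

lemma autD3: "autD_param \<eta>1 \<alpha>1 \<Longrightarrow> autD_param \<eta>2 \<alpha>2 \<Longrightarrow>
   autD_param (eta3 \<eta>1 \<alpha>1 \<eta>2 \<alpha>2) (alpha3 \<eta>1 \<alpha>1 \<eta>2 \<alpha>2)"
proof -
  assume a: "autD_param \<eta>1 \<alpha>1" "autD_param \<eta>2 \<alpha>2"
  have "cmod (alpha3 \<eta>1 \<alpha>1 \<eta>2 \<alpha>2) < 1"
    unfolding alpha3_moeb[OF a] 
    by (rule moeb_in) (use a in \<open>auto simp: autD_param_def norm_mult\<close>)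
  moreover have "cmod (eta3 \<eta>1 \<alpha>1 \<eta>2 \<alpha>2) = 1"
    unfolding eta3_def c3_eq[OF a(2)] using a c3_nz[OF a]
    by (simp only: norm_mult norm_divide complex_mod_cnj autD_param_def) simp
  ultimately show ?thesis by (simp add: autD_param_def)
qed



lemma cnj_alpha3: "autD_param \<eta>1 \<alpha>1 \<Longrightarrow> autD_param \<eta>2 \<alpha>2 \<Longrightarrow>
   cnj (alpha3 \<eta>1 \<alpha>1 \<eta>2 \<alpha>2) = (cnj \<alpha>2 + cnj \<alpha>1 * \<eta>2) / (1 + cnj \<alpha>1 * \<eta>2 * \<alpha>2)"
proof -
  assume a: "autD_param \<eta>1 \<alpha>1" "autD_param \<eta>2 \<alpha>2"
  have u: "\<eta>2 * cnj \<eta>2 = 1" using a unit_cnj by (auto simp: autD_param_def)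
  have e: "cnj \<eta>2 + cnj \<alpha>1 * \<alpha>2 \<noteq> 0"
    using c3_nz2[OF a] by (metis complex_cnj_add complex_cnj_cnj complex_cnj_mult complex_cnj_zero)
  have c: "1 + cnj \<alpha>1 * \<eta>2 * \<alpha>2 \<noteq> 0" using c3_nz[OF a] .
  have "(cnj \<eta>2 * cnj \<alpha>2 + cnj \<alpha>1) * (1 + cnj \<alpha>1 * \<eta>2 * \<alpha>2)
      = (cnj \<alpha>2 + cnj \<alpha>1 * \<eta>2) * (cnj \<eta>2 + cnj \<alpha>1 * \<alpha>2)"
  proof -
    have "(cnj \<eta>2 * cnj \<alpha>2 + cnj \<alpha>1) * (1 + cnj \<alpha>1 * \<eta>2 * \<alpha>2)
      = (cnj \<alpha>2 + cnj \<alpha>1 * \<eta>2) * (cnj \<eta>2 + cnj \<alpha>1 * \<alpha>2) + (cnj \<alpha>1 * \<alpha>2 * cnj \<alpha>2 - cnj \<alpha>1) * (\<eta>2 * cnj \<eta>2 - 1)"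
      by algebra
    then show ?thesis unfolding u by simp
  qed
  then show ?thesis unfolding alpha3_def using e c
    by (simp add: field_simps)
qed

lemma moeb_comp: "autD_param \<eta>1 \<alpha>1 \<Longrightarrow> autD_param \<eta>2 \<alpha>2 \<Longrightarrow> cmod z < 1 \<Longrightarrow>
   moeb (eta3 \<eta>1 \<alpha>1 \<eta>2 \<alpha>2) (alpha3 \<eta>1 \<alpha>1 \<eta>2 \<alpha>2) z = moeb \<eta>1 \<alpha>1 (moeb \<eta>2 \<alpha>2 z)"
proof -
  assume a: "autD_param \<eta>1 \<alpha>1" "autD_param \<eta>2 \<alpha>2" and z: "cmod z < 1"
  define c where "c = 1 + cnj \<alpha>1 * \<eta>2 * \<alpha>2"
  define e where "e = \<eta>2 + \<alpha>1 * cnj \<alpha>2"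
  define w where "w = 1 - cnj \<alpha>2 * z"
  define m where "m = moeb \<eta>2 \<alpha>2 z"
  have cn: "c \<noteq> 0" using c3_nz[OF a] c_def by simp
  have en: "e \<noteq> 0" using c3_nz2[OF a] e_def by simp
  have wn: "w \<noteq> 0" using disc_denom[of \<alpha>2 z] a z by (simp add: w_def autD_param_def)
  have mi: "cmod m < 1" using moeb_in[OF a(2) z] m_def by simp
  have mn: "1 - cnj \<alpha>1 * m \<noteq> 0" using disc_denom[of \<alpha>1 m] a mi by (simp add: autD_param_def)
  have mw: "m * w = \<eta>2 * (z - \<alpha>2)" using wn by (simp add: m_def moeb_def w_def)
  have "w * (1 - cnj \<alpha>1 * m) = w - cnj \<alpha>1 * (m * w)" by (simp add: algebra_simps)
  also have "\<dots> = c - (cnj \<alpha>2 + cnj \<alpha>1 * \<eta>2) * z" unfolding mw by (simp add: c_def w_def algebra_simps)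
  finally have cw: "c - (cnj \<alpha>2 + cnj \<alpha>1 * \<eta>2) * z = w * (1 - cnj \<alpha>1 * m)" by simp
  then have dn: "c - (cnj \<alpha>2 + cnj \<alpha>1 * \<eta>2) * z \<noteq> 0" using wn mn by simp
  have "moeb (eta3 \<eta>1 \<alpha>1 \<eta>2 \<alpha>2) (alpha3 \<eta>1 \<alpha>1 \<eta>2 \<alpha>2) z
     = \<eta>1 * e / c * (z - (\<eta>2 * \<alpha>2 + \<alpha>1) / e) / (1 - (cnj \<alpha>2 + cnj \<alpha>1 * \<eta>2) / c * z)"
    unfolding moeb_def cnj_alpha3[OF a] unfolding eta3_def alpha3_def c_def e_def by simp
  also have "\<dots> = \<eta>1 * (e * z - (\<eta>2 * \<alpha>2 + \<alpha>1)) / (c - (cnj \<alpha>2 + cnj \<alpha>1 * \<eta>2) * z)"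
  proof -
    have 1: "z - (\<eta>2 * \<alpha>2 + \<alpha>1) / e = (e * z - (\<eta>2 * \<alpha>2 + \<alpha>1)) / e" using en by (simp add: field_simps)
    have 2: "1 - (cnj \<alpha>2 + cnj \<alpha>1 * \<eta>2) / c * z = (c - (cnj \<alpha>2 + cnj \<alpha>1 * \<eta>2) * z) / c" using cn by (simp add: field_simps)
    show ?thesis unfolding 1 2 using cn en dn by simp
  qed
  also have "\<dots> = \<eta>1 * (m - \<alpha>1) / (1 - cnj \<alpha>1 * m)"
  proof -
    have "w * (m - \<alpha>1) = m * w - \<alpha>1 * w" by (simp add: algebra_simps)
    also have "\<dots> = e * z - (\<eta>2 * \<alpha>2 + \<alpha>1)" unfolding mw by (simp add: e_def w_def algebra_simps)
    finally have 3: "e * z - (\<eta>2 * \<alpha>2 + \<alpha>1) = w * (m - \<alpha>1)" by simp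
    show ?thesis unfolding 3 cw using wn by simp
  qed
  finally show ?thesis by (simp add: moeb_def m_def)
qed

lemma moeb_uniq: "autD_param \<eta> \<alpha> \<Longrightarrow> autD_param \<eta>' \<alpha>' \<Longrightarrow>
   (\<forall>z. cmod z < 1 \<longrightarrow> moeb \<eta> \<alpha> z = moeb \<eta>' \<alpha>' z) \<Longrightarrow> \<eta> = \<eta>' \<and> \<alpha> = \<alpha>'"
proof -
  assume a: "autD_param \<eta> \<alpha>" "autD_param \<eta>' \<alpha>'" and h: "\<forall>z. cmod z < 1 \<longrightarrow> moeb \<eta> \<alpha> z = moeb \<eta>' \<alpha>' z"
  have "moeb \<eta>' \<alpha>' \<alpha> = 0" using h a by (auto simp: moeb_def autD_param_def)
  moreover have "1 - cnj \<alpha>' * \<alpha> \<noteq> 0" using disc_denom[of \<alpha>' \<alpha>] a by (simp add: autD_param_def)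
  moreover have "\<eta>' \<noteq> 0" using a by (auto simp: autD_param_def)
  ultimately have aa: "\<alpha> = \<alpha>'" by (simp add: moeb_def)
  have h0: "moeb \<eta> \<alpha> 0 = moeb \<eta>' \<alpha>' 0" using h by simp
  have hh: "moeb \<eta> \<alpha> (1/2) = moeb \<eta>' \<alpha>' (1/2)" using h by simp
  show ?thesis
  proof (cases "\<alpha> = 0")
    case True
    then show ?thesis using hh aa by (simp add: moeb_def)
  next
    case False
    then show ?thesis using h0 aa by (simp add: moeb_def)
  qed
qed

lemma params_inv: "autD_param \<eta> \<alpha> \<Longrightarrow> autD_param (cnj \<eta>) (- \<eta> * \<alpha>)"
  by (simp add: autD_param_def norm_mult)

lemma inv_eta3: "autD_param \<eta> \<alpha> \<Longrightarrow> eta3 (cnj \<eta>) (- \<eta> * \<alpha>) \<eta> \<alpha> = 1 \<and> alpha3 (cnj \<eta>) (- \<eta> * \<alpha>) \<eta> \<alpha> = 0"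
proof -
  assume a: "autD_param \<eta> \<alpha>"
  have u: "\<eta> * cnj \<eta> = 1" using a unit_cnj by (auto simp: autD_param_def)
  have n: "1 + cnj (- \<eta> * \<alpha>) * \<eta> * \<alpha> \<noteq> 0" using c3_nz[OF params_inv[OF a] a] .
  have "cnj \<eta> * (\<eta> + - \<eta> * \<alpha> * cnj \<alpha>) = 1 + cnj (- \<eta> * \<alpha>) * \<eta> * \<alpha>"
    using u by (simp add: algebra_simps)
  then show ?thesis using n by (simp add: eta3_def alpha3_def)
qed

lemma inv_eta3': "autD_param \<eta> \<alpha> \<Longrightarrow> eta3 \<eta> \<alpha> (cnj \<eta>) (- \<eta> * \<alpha>) = 1 \<and> alpha3 \<eta> \<alpha> (cnj \<eta>) (- \<eta> * \<alpha>) = 0"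
proof -
  assume a: "autD_param \<eta> \<alpha>"
  have u: "\<eta> * cnj \<eta> = 1" using a unit_cnj by (auto simp: autD_param_def)
  have n: "1 + cnj \<alpha> * cnj \<eta> * (- \<eta> * \<alpha>) \<noteq> 0" using c3_nz[OF a params_inv[OF a]] .
  have "\<eta> * (cnj \<eta> + \<alpha> * cnj (- \<eta> * \<alpha>)) = 1 + cnj \<alpha> * cnj \<eta> * (- \<eta> * \<alpha>)"
    using u by (simp add: algebra_simps)
  moreover have "cnj \<eta> * (- \<eta> * \<alpha>) + \<alpha> = 0" using u by (simp add: algebra_simps)
  ultimately show ?thesis using n by (simp add: eta3_def alpha3_def)
qed

lemma moeb_id: "moeb 1 0 z = z" by (simp add: moeb_def)



lemma fmap_lam:
  assumes a: "autD_param \<eta> \<alpha>" and l: "cmod l1 < 1" "cmod l2 < 1"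
  shows "fmap \<omega> \<eta> \<alpha> (x, l1+l2, l1*l2) =
    (\<omega> * \<eta> * (1 - \<alpha> * cnj \<alpha>) * x / ((1 - cnj \<alpha> * l1) * (1 - cnj \<alpha> * l2)),
     moeb \<eta> \<alpha> l1 + moeb \<eta> \<alpha> l2, moeb \<eta> \<alpha> l1 * moeb \<eta> \<alpha> l2)"
proof -
  have n1: "1 - cnj \<alpha> * l1 \<noteq> 0" using disc_denom[of \<alpha> l1] a l by (simp add: autD_param_def)
  have n2: "1 - cnj \<alpha> * l2 \<noteq> 0" using disc_denom[of \<alpha> l2] a l by (simp add: autD_param_def)
  have d: "1 - cnj \<alpha> * (l1 + l2) + (cnj \<alpha>)^2 * (l1 * l2) = (1 - cnj \<alpha> * l1) * (1 - cnj \<alpha> * l2)"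
    by (simp add: algebra_simps power2_eq_square)
  show ?thesis
    unfolding fmap_def Let_def fst_conv snd_conv cn2 d
    using n1 n2 by (simp add: moeb_def field_simps) (simp add: algebra_simps power2_eq_square)
qed

lemma factor_F:
  assumes a: "autD_param \<eta>1 \<alpha>1" "autD_param \<eta>2 \<alpha>2" and l: "cmod l < 1"
  shows "(1 - cnj \<alpha>1 * moeb \<eta>2 \<alpha>2 l) * (1 - cnj \<alpha>2 * l)
     = (1 + cnj \<alpha>1 * \<eta>2 * \<alpha>2) * (1 - cnj (alpha3 \<eta>1 \<alpha>1 \<eta>2 \<alpha>2) * l)"
proof -
  define w where "w = 1 - cnj \<alpha>2 * l"
  define m where "m = moeb \<eta>2 \<alpha>2 l"
  have wn: "w \<noteq> 0" using disc_denom[of \<alpha>2 l] a l by (simp add: w_def autD_param_def)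
  have mw: "m * w = \<eta>2 * (l - \<alpha>2)" using wn by (simp add: m_def moeb_def w_def)
  have cn: "1 + cnj \<alpha>1 * \<eta>2 * \<alpha>2 \<noteq> 0" using c3_nz[OF a] .
  have "(1 - cnj \<alpha>1 * m) * w = w - cnj \<alpha>1 * (m * w)" by (simp add: algebra_simps)
  also have "\<dots> = (1 + cnj \<alpha>1 * \<eta>2 * \<alpha>2) - (cnj \<alpha>2 + cnj \<alpha>1 * \<eta>2) * l"
    unfolding mw by (simp add: w_def algebra_simps)
  also have "\<dots> = (1 + cnj \<alpha>1 * \<eta>2 * \<alpha>2) * (1 - cnj (alpha3 \<eta>1 \<alpha>1 \<eta>2 \<alpha>2) * l)"
    unfolding cnj_alpha3[OF a] using cn by (simp add: field_simps)
  finally show ?thesis by (simp add: m_def w_def)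
qed

lemma factor_K:
  assumes a: "autD_param \<eta>1 \<alpha>1" "autD_param \<eta>2 \<alpha>2"
  shows "\<eta>1 * \<eta>2 * (1 - \<alpha>1 * cnj \<alpha>1) * (1 - \<alpha>2 * cnj \<alpha>2)
    = (1 + cnj \<alpha>1 * \<eta>2 * \<alpha>2)^2 * eta3 \<eta>1 \<alpha>1 \<eta>2 \<alpha>2 * (1 - alpha3 \<eta>1 \<alpha>1 \<eta>2 \<alpha>2 * cnj (alpha3 \<eta>1 \<alpha>1 \<eta>2 \<alpha>2))"
proof -
  define c where "c = 1 + cnj \<alpha>1 * \<eta>2 * \<alpha>2"
  define e where "e = \<eta>2 + \<alpha>1 * cnj \<alpha>2"
  have cn: "c \<noteq> 0" using c3_nz[OF a] c_def by simp
  have en: "e \<noteq> 0" using c3_nz2[OF a] e_def by simp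
  have id: "c * e - (\<eta>2 * \<alpha>2 + \<alpha>1) * (cnj \<alpha>2 + cnj \<alpha>1 * \<eta>2) = \<eta>2 * (1 - \<alpha>1 * cnj \<alpha>1) * (1 - \<alpha>2 * cnj \<alpha>2)"
    unfolding c_def e_def by algebra
  have "c^2 * eta3 \<eta>1 \<alpha>1 \<eta>2 \<alpha>2 * (1 - alpha3 \<eta>1 \<alpha>1 \<eta>2 \<alpha>2 * cnj (alpha3 \<eta>1 \<alpha>1 \<eta>2 \<alpha>2))
     = c^2 * (\<eta>1 * e / c) * (1 - (\<eta>2 * \<alpha>2 + \<alpha>1) / e * ((cnj \<alpha>2 + cnj \<alpha>1 * \<eta>2) / c))"
    unfolding cnj_alpha3[OF a] unfolding eta3_def alpha3_def c_def e_def by simp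
  also have "\<dots> = \<eta>1 * (c * e - (\<eta>2 * \<alpha>2 + \<alpha>1) * (cnj \<alpha>2 + cnj \<alpha>1 * \<eta>2))"
    using cn en by (simp add: field_simps power2_eq_square)
  also have "\<dots> = \<eta>1 * \<eta>2 * (1 - \<alpha>1 * cnj \<alpha>1) * (1 - \<alpha>2 * cnj \<alpha>2)" unfolding id by simp
  finally show ?thesis by (simp add: c_def)
qed

lemma cancel_c: "(c::complex) \<noteq> 0 \<Longrightarrow> w * (c^2 * e * f) * x / ((c * A) * (c * B)) = w * e * f * x / (A * B)"
proof -
  assume "c \<noteq> 0"
  have "w * (c^2 * e * f) * x / ((c * A) * (c * B)) = (c*c) * (w * e * f * x) / ((c*c) * (A * B))"
    by (simp add: power2_eq_square algebra_simps)
  then show ?thesis using \<open>c \<noteq> 0\<close> by simp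
qed

lemma fmap_comp_lam:
  assumes a: "autD_param \<eta>1 \<alpha>1" "autD_param \<eta>2 \<alpha>2" and l: "cmod l1 < 1" "cmod l2 < 1"
  shows "fmap \<omega>1 \<eta>1 \<alpha>1 (fmap \<omega>2 \<eta>2 \<alpha>2 (x, l1+l2, l1*l2))
     = fmap (\<omega>1 * \<omega>2) (eta3 \<eta>1 \<alpha>1 \<eta>2 \<alpha>2) (alpha3 \<eta>1 \<alpha>1 \<eta>2 \<alpha>2) (x, l1+l2, l1*l2)"
proof -
  define m1 where "m1 = moeb \<eta>2 \<alpha>2 l1"
  define m2 where "m2 = moeb \<eta>2 \<alpha>2 l2"
  define c where "c = 1 + cnj \<alpha>1 * \<eta>2 * \<alpha>2"
  have mi: "cmod m1 < 1" "cmod m2 < 1" using moeb_in[OF a(2)] l by (auto simp: m1_def m2_def)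
  have a3: "autD_param (eta3 \<eta>1 \<alpha>1 \<eta>2 \<alpha>2) (alpha3 \<eta>1 \<alpha>1 \<eta>2 \<alpha>2)" using autD3[OF a] .
  have F1: "(1 - cnj \<alpha>1 * m1) * (1 - cnj \<alpha>2 * l1) = c * (1 - cnj (alpha3 \<eta>1 \<alpha>1 \<eta>2 \<alpha>2) * l1)"
    using factor_F[OF a l(1)] by (simp add: m1_def c_def)
  have F2: "(1 - cnj \<alpha>1 * m2) * (1 - cnj \<alpha>2 * l2) = c * (1 - cnj (alpha3 \<eta>1 \<alpha>1 \<eta>2 \<alpha>2) * l2)"
    using factor_F[OF a l(2)] by (simp add: m2_def c_def)
  have K: "\<eta>1 * \<eta>2 * (1 - \<alpha>1 * cnj \<alpha>1) * (1 - \<alpha>2 * cnj \<alpha>2)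
    = c^2 * eta3 \<eta>1 \<alpha>1 \<eta>2 \<alpha>2 * (1 - alpha3 \<eta>1 \<alpha>1 \<eta>2 \<alpha>2 * cnj (alpha3 \<eta>1 \<alpha>1 \<eta>2 \<alpha>2))"
    using factor_K[OF a] by (simp add: c_def)
  have n1: "1 - cnj \<alpha>2 * l1 \<noteq> 0" "1 - cnj \<alpha>2 * l2 \<noteq> 0"
    using disc_denom[of \<alpha>2] a l by (auto simp: autD_param_def)
  have n2: "1 - cnj \<alpha>1 * m1 \<noteq> 0" "1 - cnj \<alpha>1 * m2 \<noteq> 0"
    using disc_denom[of \<alpha>1] a mi by (auto simp: autD_param_def)
  have cn: "c \<noteq> 0" using c3_nz[OF a] c_def by simp
  have n3: "1 - cnj (alpha3 \<eta>1 \<alpha>1 \<eta>2 \<alpha>2) * l1 \<noteq> 0" "1 - cnj (alpha3 \<eta>1 \<alpha>1 \<eta>2 \<alpha>2) * l2 \<noteq> 0"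
    using F1 F2 n1 n2 by auto
  have first: "\<omega>1 * \<eta>1 * (1 - \<alpha>1 * cnj \<alpha>1) * (\<omega>2 * \<eta>2 * (1 - \<alpha>2 * cnj \<alpha>2) * x / ((1 - cnj \<alpha>2 * l1) * (1 - cnj \<alpha>2 * l2)))
        / ((1 - cnj \<alpha>1 * m1) * (1 - cnj \<alpha>1 * m2))
     = \<omega>1 * \<omega>2 * eta3 \<eta>1 \<alpha>1 \<eta>2 \<alpha>2 * (1 - alpha3 \<eta>1 \<alpha>1 \<eta>2 \<alpha>2 * cnj (alpha3 \<eta>1 \<alpha>1 \<eta>2 \<alpha>2)) * x /
        ((1 - cnj (alpha3 \<eta>1 \<alpha>1 \<eta>2 \<alpha>2) * l1) * (1 - cnj (alpha3 \<eta>1 \<alpha>1 \<eta>2 \<alpha>2) * l2))"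
  proof -
    have "\<omega>1 * \<eta>1 * (1 - \<alpha>1 * cnj \<alpha>1) * (\<omega>2 * \<eta>2 * (1 - \<alpha>2 * cnj \<alpha>2) * x / ((1 - cnj \<alpha>2 * l1) * (1 - cnj \<alpha>2 * l2)))
        / ((1 - cnj \<alpha>1 * m1) * (1 - cnj \<alpha>1 * m2))
      = \<omega>1 * \<omega>2 * (\<eta>1 * \<eta>2 * (1 - \<alpha>1 * cnj \<alpha>1) * (1 - \<alpha>2 * cnj \<alpha>2)) * x /
        (((1 - cnj \<alpha>1 * m1) * (1 - cnj \<alpha>2 * l1)) * ((1 - cnj \<alpha>1 * m2) * (1 - cnj \<alpha>2 * l2)))"
      using n1 n2 by (simp add: field_simps)
    also have "\<dots> = \<omega>1 * \<omega>2 * (c^2 * eta3 \<eta>1 \<alpha>1 \<eta>2 \<alpha>2 * (1 - alpha3 \<eta>1 \<alpha>1 \<eta>2 \<alpha>2 * cnj (alpha3 \<eta>1 \<alpha>1 \<eta>2 \<alpha>2))) * x /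
        ((c * (1 - cnj (alpha3 \<eta>1 \<alpha>1 \<eta>2 \<alpha>2) * l1)) * (c * (1 - cnj (alpha3 \<eta>1 \<alpha>1 \<eta>2 \<alpha>2) * l2)))"
      unfolding F1 F2 K ..
    also have "\<dots> = \<omega>1 * \<omega>2 * eta3 \<eta>1 \<alpha>1 \<eta>2 \<alpha>2 * (1 - alpha3 \<eta>1 \<alpha>1 \<eta>2 \<alpha>2 * cnj (alpha3 \<eta>1 \<alpha>1 \<eta>2 \<alpha>2)) * x /
        ((1 - cnj (alpha3 \<eta>1 \<alpha>1 \<eta>2 \<alpha>2) * l1) * (1 - cnj (alpha3 \<eta>1 \<alpha>1 \<eta>2 \<alpha>2) * l2))"
      by (rule cancel_c[OF cn])
    finally show ?thesis .
  qed
  show ?thesis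
    unfolding fmap_lam[OF a(2) l] fmap_lam[OF a3 l] m1_def[symmetric] m2_def[symmetric]
    unfolding fmap_lam[OF a(1) mi]
    using first moeb_comp[OF a l(1)] moeb_comp[OF a l(2)] m1_def m2_def by simp
qed



definition Qf :: "complex \<Rightarrow> complex \<Rightarrow> complex \<Rightarrow> complex \<Rightarrow> complex \<Rightarrow> complex \<Rightarrow> real" where
  "Qf a b c d x1 x2 = cmod (a*x1+b*x2)^2 + cmod (c*x1+d*x2)^2"
definition Nf :: "complex \<Rightarrow> complex \<Rightarrow> real" where
  "Nf x1 x2 = cmod x1^2 + cmod x2^2"
definition Tf :: "complex \<Rightarrow> complex \<Rightarrow> complex \<Rightarrow> complex \<Rightarrow> real" where
  "Tf a b c d = cmod a^2 + cmod b^2 + cmod c^2 + cmod d^2"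
definition Df :: "complex \<Rightarrow> complex \<Rightarrow> complex \<Rightarrow> complex \<Rightarrow> real" where
  "Df a b c d = cmod (a*d - b*c)^2"
definition good :: "complex \<Rightarrow> complex \<Rightarrow> complex \<Rightarrow> complex \<Rightarrow> bool" where
  "good a b c d \<longleftrightarrow> Tf a b c d < 1 + Df a b c d \<and> Df a b c d < 1"
definition Qb :: "complex \<Rightarrow> complex \<Rightarrow> complex \<Rightarrow> complex \<Rightarrow> real \<Rightarrow> bool" where
  "Qb a b c d k \<longleftrightarrow> (\<forall>x1 x2. Qf a b c d x1 x2 \<le> k * Nf x1 x2)"

lemma det_le: "cmod (a*d - b*c) \<le> Tf a b c d / 2"
proof -
  have "cmod (a*d - b*c) \<le> cmod a * cmod d + cmod b * cmod c"
    by (metis norm_mult norm_triangle_ineq4)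
  moreover have "2 * (cmod a * cmod d) \<le> cmod a^2 + cmod d^2"
    using sum_squares_bound[of "cmod a" "cmod d"] by (simp add: power2_eq_square)
  moreover have "2 * (cmod b * cmod c) \<le> cmod b^2 + cmod c^2"
    using sum_squares_bound[of "cmod b" "cmod c"] by (simp add: power2_eq_square)
  ultimately have "2 * cmod (a*d - b*c) \<le> Tf a b c d" unfolding Tf_def by linarith
  then show ?thesis by simp
qed

lemma polyid2:
  fixes a b c d A B C D :: complex
  shows "let H = a*A + c*C; x1 = A*b + C*d; x1' = a*B + c*D; x2 = 1 - H in
    (x1*x1' + x2*x2) - ((a*x1 + b*x2)*(A*x1' + B*x2) + (c*x1 + d*x2)*(C*x1' + D*x2))
    = (1 - H) * (1 - (a*A+b*B+c*C+d*D) + (a*d-b*c)*(A*D-B*C))"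
  unfolding Let_def by algebra

lemma PDid: "Nf (cnj a * b + cnj c * d) (complex_of_real (1 - (cmod a^2 + cmod c^2)))
   - Qf a b c d (cnj a * b + cnj c * d) (complex_of_real (1 - (cmod a^2 + cmod c^2)))
   = (1 - (cmod a^2 + cmod c^2)) * (1 - Tf a b c d + Df a b c d)"
proof -
  have "complex_of_real (Nf (cnj a * b + cnj c * d) (complex_of_real (1 - (cmod a^2 + cmod c^2)))
   - Qf a b c d (cnj a * b + cnj c * d) (complex_of_real (1 - (cmod a^2 + cmod c^2))))
   = complex_of_real ((1 - (cmod a^2 + cmod c^2)) * (1 - Tf a b c d + Df a b c d))"
    unfolding Nf_def Qf_def Tf_def Df_def
    apply (simp only: of_real_add of_real_mult of_real_diff cn2 of_real_1 complex_cnj_add complex_cnj_mult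
        complex_cnj_diff complex_cnj_one complex_cnj_cnj complex_cnj_complex_of_real)
    using polyid2[of a "cnj a" c "cnj c" b d "cnj b" "cnj d"] unfolding Let_def
    by (simp add: algebra_simps)
  then show ?thesis by (simp only: of_real_eq_iff)
qed

lemma Qb_good:
  assumes q: "Qb a b c d k" and k: "k < 1"
  shows "good a b c d"
proof -
  have e1: "cmod a^2 + cmod c^2 \<le> k" using q[unfolded Qb_def, rule_format, of 1 0] by (simp add: Qf_def Nf_def)
  have e2: "cmod b^2 + cmod d^2 \<le> k" using q[unfolded Qb_def, rule_format, of 0 1] by (simp add: Qf_def Nf_def)
  have T2: "Tf a b c d < 2" using e1 e2 k by (simp add: Tf_def)
  have "cmod (a*d - b*c) < 1" using det_le[of a d b c] T2 by linarith
  then have D1: "Df a b c d < 1" unfolding Df_def by (simp add: power_less_one_iff)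
  define h where "h = cmod a^2 + cmod c^2"
  define x1 where "x1 = cnj a * b + cnj c * d"
  define x2 where "x2 = complex_of_real (1 - h)"
  have hpos: "1 - h > 0" using e1 k h_def by simp
  have "cmod x2 = 1 - h" unfolding x2_def norm_of_real using hpos by simp
  then have "Nf x1 x2 \<ge> (1 - h)^2" unfolding Nf_def by simp
  then have npos: "Nf x1 x2 > 0" using hpos by (smt (verit) zero_less_power)
  have "Nf x1 x2 - Qf a b c d x1 x2 \<ge> (1 - k) * Nf x1 x2"
    using q[unfolded Qb_def, rule_format, of x1 x2] by (simp add: algebra_simps)
  moreover have "(1 - k) * Nf x1 x2 > 0" using k npos by simp
  ultimately have "(1 - h) * (1 - Tf a b c d + Df a b c d) > 0"
    using PDid[of a b c d] unfolding h_def x1_def x2_def by linarith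
  then have "1 - Tf a b c d + Df a b c d > 0" using hpos by (simp add: zero_less_mult_iff)
  then show ?thesis using D1 by (simp add: good_def)
qed

lemma polyid3:
  fixes a b c d A B C D x1 x2 X1 X2 :: complex
  shows "let y1 = -X2; y2 = X1; Y1 = -x2; Y2 = x1;
     u1 = a*x1+b*x2; u2 = c*x1+d*x2; U1 = A*X1+B*X2; U2 = C*X1+D*X2;
     w1 = a*y1+b*y2; w2 = c*y1+d*y2; W1 = A*Y1+B*Y2; W2 = C*Y1+D*Y2 in
     (u1*U1 + u2*U2) + (w1*W1 + w2*W2) = (a*A+b*B+c*C+d*D) * (x1*X1+x2*X2) \<and>
     (u1*U1 + u2*U2) * (w1*W1 + w2*W2) = (u1*W1 + u2*W2) * (U1*w1 + U2*w2) + ((a*d-b*c)*(A*D-B*C)) * ((x1*X1+x2*X2) * (x1*X1+x2*X2))"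
  unfolding Let_def by algebra

lemma gram:
  "Qf a b c d x1 x2 + Qf a b c d (- cnj x2) (cnj x1) = Tf a b c d * Nf x1 x2 \<and>
   Qf a b c d x1 x2 * Qf a b c d (- cnj x2) (cnj x1) =
     cmod ((a*x1+b*x2) * cnj (a*(- cnj x2)+b*cnj x1) + (c*x1+d*x2) * cnj (c*(- cnj x2)+d*cnj x1))^2
     + Df a b c d * (Nf x1 x2 * Nf x1 x2)"
proof -
  have P: "complex_of_real (Qf a b c d x1 x2 + Qf a b c d (- cnj x2) (cnj x1)) = complex_of_real (Tf a b c d * Nf x1 x2) \<and>
   complex_of_real (Qf a b c d x1 x2 * Qf a b c d (- cnj x2) (cnj x1)) = complex_of_real (
     cmod ((a*x1+b*x2) * cnj (a*(- cnj x2)+b*cnj x1) + (c*x1+d*x2) * cnj (c*(- cnj x2)+d*cnj x1))^2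
     + Df a b c d * (Nf x1 x2 * Nf x1 x2))"
    unfolding Nf_def Qf_def Tf_def Df_def
    apply (simp only: of_real_add of_real_mult of_real_diff cn2 of_real_1 complex_cnj_add complex_cnj_mult
        complex_cnj_diff complex_cnj_one complex_cnj_cnj complex_cnj_minus)
    using polyid3[of a b x1 x2 c d "cnj a" "cnj x1" "cnj b" "cnj x2" "cnj c" "cnj d"] unfolding Let_def
    by (simp add: algebra_simps)
  then show ?thesis by (simp only: of_real_eq_iff)
qed

lemma quad_bound:
  fixes q n T D :: real
  assumes "q \<ge> 0" "n \<ge> 0" "T^2 \<ge> 4*D" "q * (T*n - q) \<ge> D * n^2"
  shows "q \<le> (T + sqrt (T^2 - 4*D)) / 2 * n"
proof -
  have "(2*q - T*n)^2 \<le> (n * sqrt (T^2 - 4*D))^2"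
    using assms by (simp add: power2_eq_square algebra_simps power_mult_distrib)
  then have "\<bar>2*q - T*n\<bar> \<le> \<bar>n * sqrt (T^2 - 4*D)\<bar>" using abs_le_square_iff by blast
  then have "2*q - T*n \<le> n * sqrt (T^2 - 4*D)" using assms by simp
  then show ?thesis by (simp add: algebra_simps)
qed

lemma good_Qb:
  assumes g: "good a b c d"
  shows "\<exists>k<1. Qb a b c d k"
proof -
  define T where "T = Tf a b c d"
  define D where "D = Df a b c d"
  have T0: "T \<ge> 0" unfolding T_def Tf_def by simp
  have TD: "T < 1 + D" "D < 1" using g by (auto simp: good_def T_def D_def)
  have T4: "T^2 \<ge> 4*D"
  proof -
    have "cmod (a*d - b*c) \<le> T/2" using det_le T_def by simp
    then have "cmod (a*d - b*c)^2 \<le> (T/2)^2" by (simp add: power_mono)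
    then show ?thesis by (simp add: D_def Df_def power2_eq_square)
  qed
  define M where "M = (T + sqrt (T^2 - 4*D)) / 2"
  have "sqrt (T^2 - 4*D) < 2 - T"
  proof (rule real_less_lsqrt)
    show "0 \<le> 2 - T" using TD by simp
    show "T^2 - 4*D < (2 - T)^2" using TD by (simp add: power2_eq_square algebra_simps)
  qed
  then have M1: "M < 1" unfolding M_def by simp
  have "Qb a b c d M"
    unfolding Qb_def
  proof (intro allI)
    fix x1 x2
    have G: "Qf a b c d x1 x2 + Qf a b c d (- cnj x2) (cnj x1) = T * Nf x1 x2"
        "Qf a b c d x1 x2 * Qf a b c d (- cnj x2) (cnj x1) \<ge> D * Nf x1 x2 ^2"
      using gram[of a b c d x1 x2] by (auto simp: T_def D_def power2_eq_square)
    have e: "T * Nf x1 x2 - Qf a b c d x1 x2 = Qf a b c d (- cnj x2) (cnj x1)" using G(1) by linarith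
    have "Qf a b c d x1 x2 * (T * Nf x1 x2 - Qf a b c d x1 x2) \<ge> D * Nf x1 x2 ^2"
      unfolding e using G(2) by simp
    moreover have q0: "0 \<le> Qf a b c d x1 x2" by (simp add: Qf_def)
    moreover have n0: "0 \<le> Nf x1 x2" by (simp add: Nf_def)
    ultimately show "Qf a b c d x1 x2 \<le> M * Nf x1 x2"
      unfolding M_def using quad_bound[OF q0 n0 T4] by blast
  qed
  then show ?thesis using M1 by blast
qed

lemma eigvec:
  fixes a b c d l :: complex
  assumes "l^2 - (a+d)*l + (a*d-b*c) = 0"
  shows "\<exists>z1 z2. (z1 \<noteq> 0 \<or> z2 \<noteq> 0) \<and> a * z1 + b * z2 = l * z1 \<and> c * z1 + d * z2 = l * z2"
proof (cases "b \<noteq> 0 \<or> l \<noteq> a")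
  case True
  have "l*(l-a) - (c*b + d*(l-a)) = l^2 - (a+d)*l + (a*d-b*c)" by algebra
  then have "c*b + d*(l-a) = l*(l-a)" using assms by simp
  then show ?thesis using True by (intro exI[of _ b] exI[of _ "l-a"]) (auto simp: algebra_simps)
next
  case False
  then have b: "b = 0" "l = a" by auto
  show ?thesis
  proof (cases "l \<noteq> d \<or> c \<noteq> 0")
    case True
    then show ?thesis using b by (intro exI[of _ "l-d"] exI[of _ c]) (auto simp: algebra_simps)
  next
    case False
    then show ?thesis using b by (intro exI[of _ 1] exI[of _ 0]) auto
  qed
qed

lemma eig_disc:
  assumes q: "Qb a b c d k" and k: "k < 1" and l: "l^2 - (a+d)*l + (a*d-b*c) = 0"
  shows "cmod l < 1"
proof -
  obtain z1 z2 where v: "z1 \<noteq> 0 \<or> z2 \<noteq> 0" "a * z1 + b * z2 = l * z1" "c * z1 + d * z2 = l * z2"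
    using eigvec[OF l] by blast
  have Q: "Qf a b c d z1 z2 = cmod l^2 * Nf z1 z2"
    unfolding Qf_def Nf_def v(2,3) by (simp add: norm_mult power_mult_distrib algebra_simps)
  have n: "Nf z1 z2 > 0" using v(1) unfolding Nf_def
    by (metis add_nonneg_pos add_pos_nonneg norm_ge_zero zero_less_norm_iff zero_less_power zero_le_power)
  have "cmod l^2 * Nf z1 z2 \<le> k * Nf z1 z2" using q Q unfolding Qb_def by metis
  then have "cmod l^2 \<le> k" using n by simp
  then have "cmod l^2 < 1" using k by simp
  then show ?thesis by (simp add: power_less_one_iff)
qed

lemma roots2: "\<exists>l1 l2. l1 + l2 = s \<and> l1 * l2 = (p::complex)"
proof -
  define r where "r = csqrt (s^2 - 4*p)"
  have "r^2 = s^2 - 4*p" by (simp add: r_def)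
  then show ?thesis
    by (intro exI[of _ "(s + r)/2"] exI[of _ "(s - r)/2"])
       (simp add: field_simps power2_eq_square)
qed

lemma Qb_lam:
  assumes q: "Qb a b c d k" and k: "k < 1"
  shows "\<exists>l1 l2. cmod l1 < 1 \<and> cmod l2 < 1 \<and> a + d = l1 + l2 \<and> a*d - b*c = l1*l2"
proof -
  obtain l1 l2 where l: "l1 + l2 = a + d" "l1 * l2 = a*d - b*c" using roots2 by blast
  have "l1^2 - (a+d)*l1 + (a*d-b*c) = 0" "l2^2 - (a+d)*l2 + (a*d-b*c) = 0"
    unfolding l[symmetric] by (simp_all add: algebra_simps power2_eq_square)
  then show ?thesis using eig_disc[OF q k] l by metis
qed



lemma norm_v2: "norm (v::complex^2) ^2 = cmod (v$1)^2 + cmod (v$2)^2"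
  by (simp add: norm_vec_def L2_set_def sum_2)

lemma mv1: "((A::complex^2^2) *v v)$1 = A$1$1 * v$1 + A$1$2 * v$2"
  by (simp add: matrix_vector_mult_def sum_2)
lemma mv2: "((A::complex^2^2) *v v)$2 = A$2$1 * v$1 + A$2$2 * v$2"
  by (simp add: matrix_vector_mult_def sum_2)

lemma norm_Av: "norm ((A::complex^2^2) *v v) ^2 = Qf (A$1$1) (A$1$2) (A$2$1) (A$2$2) (v$1) (v$2)"
  unfolding norm_v2 mv1 mv2 Qf_def ..

lemma matball_Qb:
  assumes "A \<in> matball"
  shows "\<exists>k<1. Qb (A$1$1) (A$1$2) (A$2$1) (A$2$2) k"
proof -
  define f where "f = (\<lambda>x::complex^2. A *v x)"
  have bl: "bounded_linear f" unfolding f_def by simp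
  have o1: "onorm f < 1" using assms unfolding matball_def f_def by simp
  have o0: "0 \<le> onorm f" using onorm_pos_le[OF bl] .
  have "Qb (A$1$1) (A$1$2) (A$2$1) (A$2$2) ((onorm f)^2)"
    unfolding Qb_def
  proof (intro allI)
    fix x1 x2
    define v where "v = (vector [x1, x2] :: complex^2)"
    have "norm (f v) \<le> onorm f * norm v" using onorm[OF bl] .
    then have "norm (f v)^2 \<le> (onorm f * norm v)^2" by (simp add: power_mono)
    then have "norm (A *v v)^2 \<le> (onorm f)^2 * norm v^2" by (simp add: f_def power_mult_distrib)
    then show "Qf (A$1$1) (A$1$2) (A$2$1) (A$2$2) x1 x2 \<le> (onorm f)^2 * Nf x1 x2"
      unfolding norm_Av unfolding norm_v2 v_def Nf_def by simp
  qed
  moreover have "(onorm f)^2 < 1" using o0 o1 by (simp add: power_less_one_iff)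
  ultimately show ?thesis by blast
qed

lemma Qb_matball:
  assumes q: "Qb (A$1$1) (A$1$2) (A$2$1) (A$2$2) k" and k: "k < 1"
  shows "A \<in> matball"
proof -
  define k' where "k' = max k 0"
  have k': "0 \<le> k'" "k' < 1" using k by (auto simp: k'_def)
  have "onorm (\<lambda>x::complex^2. A *v x) \<le> sqrt k'"
  proof (rule onorm_le)
    fix v :: "complex^2"
    have "norm (A *v v)^2 \<le> k * norm v ^2"
      using q unfolding Qb_def norm_Av unfolding norm_v2 Nf_def by blast
    also have "\<dots> \<le> k' * norm v^2" by (simp add: k'_def mult_right_mono)
    finally have "norm (A *v v) \<le> sqrt (k' * norm v^2)" by (rule real_le_rsqrt)
    also have "\<dots> = sqrt k' * norm v" by (simp add: real_sqrt_mult)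
    finally show "norm (A *v v) \<le> sqrt k' * norm v" .
  qed
  moreover have "sqrt k' < 1" using k' by simp
  ultimately have "onorm (\<lambda>x::complex^2. A *v x) < 1" by linarith
  then show ?thesis unfolding matball_def by simp
qed

definition mat2 :: "complex \<Rightarrow> complex \<Rightarrow> complex \<Rightarrow> complex \<Rightarrow> complex^2^2" where
  "mat2 a b c d = vector [vector [a, b], vector [c, d]]"

lemma mat2_ent: "mat2 a b c d $1$1 = a" "mat2 a b c d $1$2 = b" "mat2 a b c d $2$1 = c" "mat2 a b c d $2$2 = d"
  by (simp_all add: mat2_def)

lemma pent_char: "x \<in> pentablock \<longleftrightarrow> (\<exists>a b c d. good a b c d \<and> x = (c, a+d, a*d-b*c))"
proof
  assume "x \<in> pentablock"
  then obtain A where A: "A \<in> matball" "x = piA A" unfolding pentablock_def by blast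
  obtain k where "k < 1" "Qb (A$1$1) (A$1$2) (A$2$1) (A$2$2) k" using matball_Qb[OF A(1)] by blast
  then have "good (A$1$1) (A$1$2) (A$2$1) (A$2$2)" using Qb_good by blast
  moreover have "x = (A$2$1, A$1$1 + A$2$2, A$1$1 * A$2$2 - A$1$2 * A$2$1)"
    using A(2) by (simp add: piA_def det_2)
  ultimately show "\<exists>a b c d. good a b c d \<and> x = (c, a+d, a*d-b*c)" by blast
next
  assume "\<exists>a b c d. good a b c d \<and> x = (c, a+d, a*d-b*c)"
  then obtain a b c d where g: "good a b c d" "x = (c, a+d, a*d-b*c)" by blast
  obtain k where "k < 1" "Qb a b c d k" using good_Qb[OF g(1)] by blast
  then have "mat2 a b c d \<in> matball" using Qb_matball[of "mat2 a b c d" k] by (simp add: mat2_ent)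
  moreover have "piA (mat2 a b c d) = x" using g(2) by (simp add: piA_def det_2 mat2_ent)
  ultimately show "x \<in> pentablock" unfolding pentablock_def by blast
qed

lemma good_lam: "good a b c d \<Longrightarrow> \<exists>l1 l2. cmod l1 < 1 \<and> cmod l2 < 1 \<and> a + d = l1 + l2 \<and> a*d - b*c = l1*l2"
  using good_Qb Qb_lam by blast

lemma pent_lam: "x \<in> pentablock \<Longrightarrow> \<exists>c l1 l2. cmod l1 < 1 \<and> cmod l2 < 1 \<and> x = (c, l1+l2, l1*l2)"
  unfolding pent_char using good_lam by metis



definition "N11 a b c d l = (a-l)*(1-cnj l*d)+b*cnj l*c"
definition "N12 a b c d l = b*(1-l*cnj l)"
definition "N21 a b c d l = c*(1-l*cnj l)"
definition "N22 a b c d l = c*cnj l*b+(d-l)*(1-cnj l*a)"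
definition "DD a b c d l = 1 - cnj l * (a+d) + (cnj l)^2 * (a*d-b*c)"
definition "PP a b c d l = l^2 - l*(a+d) + (a*d-b*c)"

lemma polyid:
  fixes a b c d l a' b' c' d' l' :: complex
  shows "(1 - l' * (a+d) + l'^2 * (a*d-b*c)) * (1 - l * (a'+d') + l^2 * (a'*d'-b'*c'))
   - (((a-l)*(1-l'*d)+b*l'*c) * ((a'-l')*(1-l*d')+b'*l*c') + (b*(1-l*l'))*(b'*(1-l'*l))
      + (c*(1-l*l'))*(c'*(1-l'*l)) + (c*l'*b+(d-l)*(1-l'*a))*(c'*l*b'+(d'-l')*(1-l*a')))
   + (l^2-l*(a+d)+(a*d-b*c))*(l'^2-l'*(a'+d')+(a'*d'-b'*c'))
    = (1 - l*l')^2 * (1 - (a*a'+b*b'+c*c'+d*d') + (a*d-b*c)*(a'*d'-b'*c'))"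
  by algebra

lemma bigid: "cmod (DD a b c d l)^2 - (cmod (N11 a b c d l)^2 + cmod (N12 a b c d l)^2 + cmod (N21 a b c d l)^2
   + cmod (N22 a b c d l)^2) + cmod (PP a b c d l)^2 = (1 - cmod l^2)^2 * (1 - Tf a b c d + Df a b c d)"
proof -
  have "complex_of_real (cmod (DD a b c d l)^2 - (cmod (N11 a b c d l)^2 + cmod (N12 a b c d l)^2 + cmod (N21 a b c d l)^2
   + cmod (N22 a b c d l)^2) + cmod (PP a b c d l)^2) = complex_of_real ((1 - cmod l^2) * (1 - cmod l^2) * (1 - Tf a b c d + Df a b c d))"
    unfolding DD_def N11_def N12_def N21_def N22_def PP_def Tf_def Df_def
    apply (simp only: of_real_add of_real_mult of_real_diff cn2 of_real_1 complex_cnj_add complex_cnj_mult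
        complex_cnj_diff complex_cnj_one complex_cnj_cnj complex_cnj_power)
    using polyid[where a=a and b=b and c=c and d=d and l=l and l'="cnj l" and a'="cnj a" and b'="cnj b" and c'="cnj c" and d'="cnj d"] by (simp add: power2_eq_square)
  then show ?thesis by (simp only: of_real_eq_iff power2_eq_square)
qed

lemma tr_id: "N11 a b c d l + N22 a b c d l = - 2 * l + (1 + l * cnj l) * (a+d) - 2 * cnj l * (a*d-b*c)"
  unfolding N11_def N22_def by algebra
lemma det_id: "N11 a b c d l * N22 a b c d l - N12 a b c d l * N21 a b c d l = PP a b c d l * DD a b c d l"
  unfolding N11_def N22_def N12_def N21_def PP_def DD_def by algebra

lemma fmap_into:
  assumes g: "good a b c d" and w: "cmod \<omega> = 1" and a: "autD_param \<eta> \<alpha>"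
  shows "fmap \<omega> \<eta> \<alpha> (c, a+d, a*d-b*c) \<in> pentablock"
proof -
  obtain l1 l2 where l: "cmod l1 < 1" "cmod l2 < 1" "a + d = l1 + l2" "a*d - b*c = l1*l2"
    using good_lam[OF g] by blast
  have al: "cmod \<alpha> < 1" "cmod \<eta> = 1" using a by (auto simp: autD_param_def)
  have Dfac: "DD a b c d \<alpha> = (1 - cnj \<alpha> * l1) * (1 - cnj \<alpha> * l2)"
    unfolding DD_def l(3,4) by (simp add: algebra_simps power2_eq_square)
  have Pfac: "PP a b c d \<alpha> = (l1 - \<alpha>) * (l2 - \<alpha>)"
    unfolding PP_def l(3,4) by (simp add: algebra_simps power2_eq_square)
  have n1: "1 - cnj \<alpha> * l1 \<noteq> 0" "1 - cnj \<alpha> * l2 \<noteq> 0" using disc_denom[of \<alpha>] al l by auto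
  have Dn: "DD a b c d \<alpha> \<noteq> 0" using Dfac n1 by simp
  have PD: "cmod (PP a b c d \<alpha>) < cmod (DD a b c d \<alpha>)"
  proof -
    have "cmod (l1 - \<alpha>) * cmod (l2 - \<alpha>) < cmod (1 - cnj \<alpha> * l1) * cmod (1 - cnj \<alpha> * l2)"
      using moeb_less[OF al(1) l(1)] moeb_less[OF al(1) l(2)]
      by (intro mult_strict_mono) auto
    then show ?thesis unfolding Dfac Pfac by (simp add: norm_mult)
  qed
  have uw: "\<omega> * cnj \<omega> = 1" using unit_cnj w by blast
  define D where "D = DD a b c d \<alpha>"
  define a' where "a' = \<eta> * N11 a b c d \<alpha> / D"
  define b' where "b' = \<eta> * cnj \<omega> * N12 a b c d \<alpha> / D"
  define c' where "c' = \<eta> * \<omega> * N21 a b c d \<alpha> / D"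
  define d' where "d' = \<eta> * N22 a b c d \<alpha> / D"
  have Dn': "D \<noteq> 0" using Dn D_def by simp
  have e1: "a' + d' = \<eta> / D * (- 2 * \<alpha> + (1 + \<alpha> * cnj \<alpha>) * (a+d) - 2 * cnj \<alpha> * (a*d-b*c))"
    unfolding a'_def d'_def tr_id[symmetric] using Dn' by (simp add: field_simps)
  have "a' * d' - b' * c' = \<eta> * \<eta> * (N11 a b c d \<alpha> * N22 a b c d \<alpha> - (\<omega> * cnj \<omega>) * (N12 a b c d \<alpha> * N21 a b c d \<alpha>)) / (D * D)"
    unfolding a'_def b'_def c'_def d'_def using Dn' by (simp add: field_simps)
  also have "\<dots> = \<eta> / D * (\<eta> * PP a b c d \<alpha>)"
    unfolding uw using det_id[of a b c d \<alpha>] Dn' by (simp add: D_def field_simps)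
  finally have e2: "a' * d' - b' * c' = \<eta> / D * (\<eta> * PP a b c d \<alpha>)" .
  have e0: "c' = \<eta> / D * (\<omega> * (1 - \<alpha> * cnj \<alpha>) * c)"
    unfolding c'_def N21_def by (simp add: field_simps)
  have fm: "fmap \<omega> \<eta> \<alpha> (c, a+d, a*d-b*c) = (c', a' + d', a' * d' - b' * c')"
  proof -
    have fm0: "fmap \<omega> \<eta> \<alpha> (c, a+d, a*d-b*c) = (\<eta> / D * (\<omega> * (1 - \<alpha> * cnj \<alpha>) * c),
       \<eta> / D * (- 2 * \<alpha> + (1 + \<alpha> * cnj \<alpha>) * (a+d) - 2 * cnj \<alpha> * (a*d-b*c)), \<eta> / D * (\<eta> * PP a b c d \<alpha>))"
      unfolding fmap_def Let_def fst_conv snd_conv cn2 D_def DD_def PP_def by simp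
    show ?thesis unfolding fm0 e0[symmetric] e1[symmetric] e2[symmetric] ..
  qed
  have cD: "cmod D > 0" using Dn' by simp
  have Tn: "Tf a' b' c' d' = (cmod (N11 a b c d \<alpha>)^2 + cmod (N12 a b c d \<alpha>)^2 + cmod (N21 a b c d \<alpha>)^2
   + cmod (N22 a b c d \<alpha>)^2) / cmod D ^2"
    unfolding Tf_def a'_def b'_def c'_def d'_def using al w
    by (simp add: norm_mult norm_divide power_divide add_divide_distrib)
  have Dn2: "Df a' b' c' d' = cmod (PP a b c d \<alpha>)^2 / cmod D ^2"
    unfolding Df_def e2 using al by (simp add: norm_mult norm_divide power_divide)
  have gA: "1 - Tf a b c d + Df a b c d > 0" using g by (simp add: good_def)
  have "1 - cmod \<alpha>^2 > 0" using al by (simp add: power_less_one_iff)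
  then have "(1 - cmod \<alpha>^2)^2 * (1 - Tf a b c d + Df a b c d) > 0" using gA by simp
  then have "cmod D^2 - (cmod (N11 a b c d \<alpha>)^2 + cmod (N12 a b c d \<alpha>)^2 + cmod (N21 a b c d \<alpha>)^2
   + cmod (N22 a b c d \<alpha>)^2) + cmod (PP a b c d \<alpha>)^2 > 0" using bigid[of a b c d \<alpha>] D_def by simp
  then have "Tf a' b' c' d' < 1 + Df a' b' c' d'" unfolding Tn Dn2 using cD
    by (simp add: divide_simps)
  moreover have "Df a' b' c' d' < 1" unfolding Dn2 using cD PD D_def
    by (simp add: divide_simps power_strict_mono)
  ultimately have "good a' b' c' d'" by (simp add: good_def)
  then show ?thesis unfolding fm pent_char by blast
qed



lemma root_bound:
  fixes r s q :: complex
  assumes "r^2 = s*r - q"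
  shows "cmod r \<le> 1 + cmod s + cmod q"
proof (cases "cmod r \<le> 1")
  case True then show ?thesis by (smt (verit) norm_ge_zero)
next
  case False
  have "cmod r * cmod r = cmod (s*r - q)" using assms by (simp add: power2_eq_square norm_mult[symmetric])
  also have "\<dots> \<le> cmod s * cmod r + cmod q" by (metis norm_mult norm_triangle_ineq4)
  also have "\<dots> \<le> cmod s * cmod r + cmod q * cmod r" using False by (simp add: mult_le_cancel_left1)
  finally have h: "cmod r * cmod r \<le> (cmod s + cmod q) * cmod r" by (simp add: algebra_simps)
  have "cmod r \<le> cmod s + cmod q" using mult_right_le_imp_le[OF h] False by linarith
  then show ?thesis by simp
qed

lemma root_pert:
  fixes r s q a d :: complex
  assumes h: "r^2 = s*r - q"
  shows "min (cmod (r-a)) (cmod (r-d)) \<le> sqrt (cmod (s-(a+d)) * (1 + cmod s + cmod q) + cmod (q - a*d))"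
proof -
  have "(r-a)*(r-d) = (s-(a+d))*r - (q - a*d)" using h by (simp add: algebra_simps power2_eq_square)
  then have "cmod (r-a) * cmod (r-d) \<le> cmod (s-(a+d)) * cmod r + cmod (q - a*d)"
    by (metis norm_mult norm_triangle_ineq4)
  also have "\<dots> \<le> cmod (s-(a+d)) * (1 + cmod s + cmod q) + cmod (q - a*d)"
    using root_bound[OF h] by (simp add: mult_left_mono)
  finally have p: "cmod (r-a) * cmod (r-d) \<le> cmod (s-(a+d)) * (1 + cmod s + cmod q) + cmod (q - a*d)" .
  have "min (cmod (r-a)) (cmod (r-d)) ^2 \<le> cmod (r-a) * cmod (r-d)"
    by (simp add: power2_eq_square min_def mult_left_mono mult_right_mono)
  then show ?thesis using p by (intro real_le_rsqrt) linarith
qed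

lemma good_open: "open {t::complex\<times>complex\<times>complex. good (fst t) b (fst (snd t)) (snd (snd t))}"
  unfolding good_def Tf_def Df_def
  by (intro open_Collect_conj open_Collect_less continuous_intros)

lemma pent_open: "open pentablock"
proof -
  have "\<forall>x\<in>pentablock. eventually (\<lambda>y. y \<in> pentablock) (nhds x)"
  proof
    fix x0 assume "x0 \<in> pentablock"
    then obtain a b c d where g: "good a b c d" and x0: "x0 = (c, a+d, a*d-b*c)"
      unfolding pent_char by blast
    define q where "q = (\<lambda>y::complex\<times>complex\<times>complex. snd (snd y) + b * fst y)"
    define r where "r = (\<lambda>y. (fst (snd y) + csqrt ((fst (snd y))^2 - 4 * q y)) / 2)"
    define r' where "r' = (\<lambda>y. fst (snd y) - r y)"
    define E where "E = (\<lambda>y. if cmod (r y - a) \<le> cmod (r y - d) then (r y, fst y, r' y) else (r' y, fst y, r y))"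
    define et where "et = (\<lambda>y. cmod (fst (snd y) - (a+d)) * (1 + cmod (fst (snd y)) + cmod (q y)) + cmod (q y - a*d))"
    define B where "B = (\<lambda>y. 2 * (cmod (fst (snd y) - (a+d)) + sqrt (et y)) + cmod (fst y - c))"
    have rr: "r y + r' y = fst (snd y)" "r y * r' y = q y" for y
    proof -
      show "r y + r' y = fst (snd y)" by (simp add: r'_def)
      have "(csqrt ((fst (snd y))^2 - 4 * q y))^2 = (fst (snd y))^2 - 4 * q y" by simp
      then show "r y * r' y = q y" unfolding r'_def r_def
        by (simp add: field_simps power2_eq_square)
    qed
    have req: "(r y)^2 = fst (snd y) * r y - q y" for y
      using rr[of y] by (simp add: power2_eq_square algebra_simps r'_def)
    have yE: "y = (fst (snd (E y)), fst (E y) + snd (snd (E y)), fst (E y) * snd (snd (E y)) - b * fst (snd (E y)))" for y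
      using rr[of y] by (cases y) (auto simp: E_def q_def algebra_simps)
    have bound: "norm (E y - (a, c, d)) \<le> B y" for y
    proof -
      have m: "min (cmod (r y - a)) (cmod (r y - d)) \<le> sqrt (et y)"
        unfolding et_def using root_pert[OF req[of y], of a d] .
      have tri: "norm ((u::complex, v::complex, w::complex)) \<le> cmod u + cmod v + cmod w" for u v w
        using norm_Pair_le[of u "(v,w)"] norm_Pair_le[of v w] by simp
      show ?thesis
      proof (cases "cmod (r y - a) \<le> cmod (r y - d)")
        case True
        have 1: "cmod (r y - a) \<le> sqrt (et y)" using m True by simp
        have "cmod (r' y - d) = cmod ((fst (snd y) - (a+d)) + (a - r y))" by (simp add: r'_def algebra_simps)
        also have "\<dots> \<le> cmod (fst (snd y) - (a+d)) + cmod (r y - a)"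
          by (metis norm_minus_commute norm_triangle_ineq)
        finally have 2: "cmod (r' y - d) \<le> cmod (fst (snd y) - (a+d)) + sqrt (et y)" using 1 by simp
        have "norm (E y - (a, c, d)) \<le> cmod (r y - a) + cmod (fst y - c) + cmod (r' y - d)"
          using True tri by (simp add: E_def)
        then show ?thesis using 1 2 unfolding B_def by (smt (verit) norm_ge_zero)
      next
        case False
        have 1: "cmod (r y - d) \<le> sqrt (et y)" using m False by simp
        have "cmod (r' y - a) = cmod ((fst (snd y) - (a+d)) + (d - r y))" by (simp add: r'_def algebra_simps)
        also have "\<dots> \<le> cmod (fst (snd y) - (a+d)) + cmod (r y - d)"
          by (metis norm_minus_commute norm_triangle_ineq)
        finally have 2: "cmod (r' y - a) \<le> cmod (fst (snd y) - (a+d)) + sqrt (et y)" using 1 by simp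
        have "norm (E y - (a, c, d)) \<le> cmod (r' y - a) + cmod (fst y - c) + cmod (r y - d)"
          using False tri by (simp add: E_def)
        then show ?thesis using 1 2 unfolding B_def by (smt (verit) norm_ge_zero)
      qed
    qed
    have Bt: "(B \<longlongrightarrow> B x0) (nhds x0)"
      unfolding B_def et_def q_def by (intro tendsto_intros filterlim_ident)
    have B0: "B x0 = 0" unfolding B_def et_def q_def x0 by simp
    have "((\<lambda>y. E y - (a, c, d)) \<longlongrightarrow> 0) (nhds x0)"
      by (rule Lim_null_comparison[OF _ Bt[unfolded B0]]) (simp add: bound)
    then have Et: "(E \<longlongrightarrow> (a, c, d)) (nhds x0)" by (rule LIM_zero_cancel)
    have "(a, c, d) \<in> {t. good (fst t) b (fst (snd t)) (snd (snd t))}" using g by simp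
    then have "eventually (\<lambda>y. E y \<in> {t. good (fst t) b (fst (snd t)) (snd (snd t))}) (nhds x0)"
      using topological_tendstoD[OF Et good_open] by blast
    then show "eventually (\<lambda>y. y \<in> pentablock) (nhds x0)"
    proof (rule eventually_mono)
      fix y assume "E y \<in> {t. good (fst t) b (fst (snd t)) (snd (snd t))}"
      then have "good (fst (E y)) b (fst (snd (E y))) (snd (snd (E y)))" by simp
      then show "y \<in> pentablock" unfolding pent_char using yE[of y] by blast
    qed
  qed
  note * = this
  show ?thesis
  proof (subst open_subopen, intro ballI)
    fix x assume "x \<in> pentablock"
    then obtain S where "open S" "x \<in> S" "\<forall>y\<in>S. y \<in> pentablock"
      using * unfolding eventually_nhds by blast
    then show "\<exists>T. open T \<and> x \<in> T \<and> T \<subseteq> pentablock" by blast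
  qed
qed



definition hc :: "c3 \<Rightarrow> (c3 \<Rightarrow> complex) \<Rightarrow> bool" where
  "hc x f \<longleftrightarrow> (\<exists>D. (f has_derivative D) (at x) \<and> (\<forall>c v. D (smul3 c v) = c * D v))"

lemma hc_const: "hc x (\<lambda>y. k)"
  unfolding hc_def by (rule exI[of _ "\<lambda>_. 0"]) simp

lemma hc_fst: "hc x (\<lambda>y. fst y)"
  unfolding hc_def
  by (rule exI[of _ "\<lambda>v. fst v"]) (auto simp: smul3_def intro: has_derivative_fst[OF has_derivative_ident])

lemma hc_fs: "hc x (\<lambda>y. fst (snd y))"
  unfolding hc_def
  by (rule exI[of _ "\<lambda>v. fst (snd v)"])
     (auto simp: smul3_def intro: has_derivative_fst[OF has_derivative_snd[OF has_derivative_ident]])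

lemma hc_ss: "hc x (\<lambda>y. snd (snd y))"
  unfolding hc_def
  by (rule exI[of _ "\<lambda>v. snd (snd v)"])
     (auto simp: smul3_def intro: has_derivative_snd[OF has_derivative_snd[OF has_derivative_ident]])

lemma hc_add: "hc x f \<Longrightarrow> hc x g \<Longrightarrow> hc x (\<lambda>y. f y + g y)"
  unfolding hc_def
  apply (elim exE conjE)
  subgoal for D E by (rule exI[of _ "\<lambda>v. D v + E v"]) (auto intro: has_derivative_add simp: algebra_simps)
  done

lemma hc_diff: "hc x f \<Longrightarrow> hc x g \<Longrightarrow> hc x (\<lambda>y. f y - g y)"
  unfolding hc_def
  apply (elim exE conjE)
  subgoal for D E by (rule exI[of _ "\<lambda>v. D v - E v"]) (auto intro: has_derivative_diff simp: algebra_simps)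
  done

lemma hc_mult: "hc x f \<Longrightarrow> hc x g \<Longrightarrow> hc x (\<lambda>y. f y * g y)"
  unfolding hc_def
  apply (elim exE conjE)
  subgoal for D E
    apply (rule exI[of _ "\<lambda>v. f x * E v + D v * g x"])
    apply (rule conjI)
     apply (rule has_derivative_mult; assumption)
    apply (simp add: algebra_simps)
    done
  done

lemma hc_divide: "hc x f \<Longrightarrow> hc x g \<Longrightarrow> g x \<noteq> 0 \<Longrightarrow> hc x (\<lambda>y. f y / g y)"
  unfolding hc_def
  apply (elim exE conjE)
  subgoal for D E
    apply (rule exI[of _ "\<lambda>h. - f x * (inverse (g x) * E h * inverse (g x)) + D h / g x"])
    apply (rule conjI)
     apply (rule has_derivative_divide; assumption)
    apply (simp add: algebra_simps)
    done
  done

lemma holo3_from: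
  assumes "\<And>x. x \<in> S \<Longrightarrow> hc x f1 \<and> hc x f2 \<and> hc x f3"
  shows "holo3_on S (\<lambda>x. (f1 x, f2 x, f3 x))"
  unfolding holo3_on_def
proof
  fix x assume "x \<in> S"
  then obtain D1 D2 D3 where
    d: "(f1 has_derivative D1) (at x)" "(f2 has_derivative D2) (at x)" "(f3 has_derivative D3) (at x)"
    and l: "\<forall>c v. D1 (smul3 c v) = c * D1 v" "\<forall>c v. D2 (smul3 c v) = c * D2 v" "\<forall>c v. D3 (smul3 c v) = c * D3 v"
    using assms unfolding hc_def by metis
  show "\<exists>D. ((\<lambda>x. (f1 x, f2 x, f3 x)) has_derivative D) (at x) \<and> (\<forall>c v. D (smul3 c v) = smul3 c (D v))"
    by (rule exI[of _ "\<lambda>v. (D1 v, D2 v, D3 v)"])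
       (use d l in \<open>auto intro!: has_derivative_Pair simp: smul3_def\<close>)
qed

definition dd :: "complex \<Rightarrow> c3 \<Rightarrow> complex" where
  "dd \<alpha> x = 1 - cnj \<alpha> * fst (snd x) + (cnj \<alpha>)^2 * snd (snd x)"

lemma fmap_eq: "fmap \<omega> \<eta> \<alpha> = (\<lambda>x. (\<eta> / dd \<alpha> x * (\<omega> * (1 - complex_of_real ((norm \<alpha>)^2)) * fst x),
       \<eta> / dd \<alpha> x * (- 2 * \<alpha> + (1 + complex_of_real ((norm \<alpha>)^2)) * fst (snd x) - 2 * cnj \<alpha> * snd (snd x)),
       \<eta> / dd \<alpha> x * (\<eta> * (\<alpha>^2 - \<alpha> * fst (snd x) + snd (snd x)))))"
  by (rule ext) (simp add: fmap_def dd_def Let_def)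

lemma hc_dd: "hc x (dd \<alpha>)"
proof -
  have "hc x (\<lambda>y. 1 - cnj \<alpha> * fst (snd y) + (cnj \<alpha>)^2 * snd (snd y))"
    by (intro hc_add hc_diff hc_mult hc_const hc_fs hc_ss)
  then show ?thesis unfolding dd_def[abs_def] .
qed

lemma fmap_holo: "holo3_on {x. dd \<alpha> x \<noteq> 0} (fmap \<omega> \<eta> \<alpha>)"
  unfolding fmap_eq
  by (rule holo3_from) (auto intro!: hc_add hc_diff hc_mult hc_divide hc_const hc_fs hc_ss hc_fst hc_dd)



lemma dd_lam: "dd \<alpha> (c, l1+l2, l1*l2) = (1 - cnj \<alpha> * l1) * (1 - cnj \<alpha> * l2)"
  by (simp add: dd_def algebra_simps power2_eq_square)

lemma dd_pent: "x \<in> pentablock \<Longrightarrow> cmod \<alpha> < 1 \<Longrightarrow> (1 - cmod \<alpha>)^2 \<le> cmod (dd \<alpha> x)"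
proof -
  assume x: "x \<in> pentablock" and a: "cmod \<alpha> < 1"
  obtain c l1 l2 where l: "cmod l1 < 1" "cmod l2 < 1" "x = (c, l1+l2, l1*l2)" using pent_lam[OF x] by blast
  have "1 - cmod \<alpha> \<le> cmod (1 - cnj \<alpha> * l1)" "1 - cmod \<alpha> \<le> cmod (1 - cnj \<alpha> * l2)"
    using disc_lower[OF a] l by auto
  moreover have "0 \<le> 1 - cmod \<alpha>" using a by simp
  ultimately have "(1 - cmod \<alpha>) * (1 - cmod \<alpha>) \<le> cmod (1 - cnj \<alpha> * l1) * cmod (1 - cnj \<alpha> * l2)"
    by (intro mult_mono) auto
  then show ?thesis unfolding l(3) dd_lam by (simp add: norm_mult power2_eq_square)
qed

lemma dd_nz: "x \<in> pentablock \<Longrightarrow> cmod \<alpha> < 1 \<Longrightarrow> dd \<alpha> x \<noteq> 0"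
proof -
  assume "x \<in> pentablock" "cmod \<alpha> < 1"
  then have "(1 - cmod \<alpha>)^2 \<le> cmod (dd \<alpha> x)" "(1 - cmod \<alpha>)^2 > 0" using dd_pent by auto
  then show ?thesis by auto
qed

lemma fmap_P: "x \<in> pentablock \<Longrightarrow> cmod \<omega> = 1 \<Longrightarrow> autD_param \<eta> \<alpha> \<Longrightarrow> fmap \<omega> \<eta> \<alpha> x \<in> pentablock"
  using fmap_into unfolding pent_char by blast

lemma comp_P: "x \<in> pentablock \<Longrightarrow> autD_param \<eta>1 \<alpha>1 \<Longrightarrow> autD_param \<eta>2 \<alpha>2 \<Longrightarrow>
  fmap \<omega>1 \<eta>1 \<alpha>1 (fmap \<omega>2 \<eta>2 \<alpha>2 x) = fmap (\<omega>1 * \<omega>2) (eta3 \<eta>1 \<alpha>1 \<eta>2 \<alpha>2) (alpha3 \<eta>1 \<alpha>1 \<eta>2 \<alpha>2) x"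
  using pent_lam fmap_comp_lam by metis

lemma fmap_id: "fmap 1 1 0 x = x"
  by (cases x) (simp add: fmap_def Let_def)

lemma left_inv: "x \<in> pentablock \<Longrightarrow> cmod \<omega> = 1 \<Longrightarrow> autD_param \<eta> \<alpha> \<Longrightarrow>
   fmap (cnj \<omega>) (cnj \<eta>) (- \<eta> * \<alpha>) (fmap \<omega> \<eta> \<alpha> x) = x"
proof -
  assume x: "x \<in> pentablock" and w: "cmod \<omega> = 1" and a: "autD_param \<eta> \<alpha>"
  have "cnj \<omega> * \<omega> = 1" using unit_cnj[OF w] by (simp add: mult.commute)
  then show ?thesis using comp_P[OF x params_inv[OF a] a, of "cnj \<omega>" \<omega>] inv_eta3[OF a] fmap_id by simp
qed

lemma right_inv: "x \<in> pentablock \<Longrightarrow> cmod \<omega> = 1 \<Longrightarrow> autD_param \<eta> \<alpha> \<Longrightarrow>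
   fmap \<omega> \<eta> \<alpha> (fmap (cnj \<omega>) (cnj \<eta>) (- \<eta> * \<alpha>) x) = x"
proof -
  assume x: "x \<in> pentablock" and w: "cmod \<omega> = 1" and a: "autD_param \<eta> \<alpha>"
  have "\<omega> * cnj \<omega> = 1" using unit_cnj[OF w] .
  then show ?thesis using comp_P[OF x a params_inv[OF a], of \<omega> "cnj \<omega>"] inv_eta3'[OF a] fmap_id by simp
qed

lemma holo3_mono: "holo3_on T f \<Longrightarrow> S \<subseteq> T \<Longrightarrow> holo3_on S f"
  unfolding holo3_on_def by blast

lemma inv_into_eq: "x \<in> pentablock \<Longrightarrow> cmod \<omega> = 1 \<Longrightarrow> autD_param \<eta> \<alpha> \<Longrightarrow>
   inv_into pentablock (fmap \<omega> \<eta> \<alpha>) x = fmap (cnj \<omega>) (cnj \<eta>) (- \<eta> * \<alpha>) x"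
proof -
  assume x: "x \<in> pentablock" and w: "cmod \<omega> = 1" and a: "autD_param \<eta> \<alpha>"
  have inj: "inj_on (fmap \<omega> \<eta> \<alpha>) pentablock"
    by (rule inj_on_inverseI[where g="fmap (cnj \<omega>) (cnj \<eta>) (- \<eta> * \<alpha>)"]) (use left_inv w a in auto)
  have gx: "fmap (cnj \<omega>) (cnj \<eta>) (- \<eta> * \<alpha>) x \<in> pentablock"
    using fmap_P[OF x _ params_inv[OF a]] w by simp
  have "inv_into pentablock (fmap \<omega> \<eta> \<alpha>) (fmap \<omega> \<eta> \<alpha> (fmap (cnj \<omega>) (cnj \<eta>) (- \<eta> * \<alpha>) x))
      = fmap (cnj \<omega>) (cnj \<eta>) (- \<eta> * \<alpha>) x" by (rule inv_into_f_f[OF inj gx])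
  then show ?thesis using right_inv[OF x w a] by simp
qed

lemma part1:
  assumes w: "cmod \<omega> = 1" and a: "autD_param \<eta> \<alpha>"
  shows "is_aut3 pentablock (fmap \<omega> \<eta> \<alpha>) \<and>
       (\<exists>U g. open U \<and> closure pentablock \<subseteq> U \<and> holo3_on U g \<and>
              (\<forall>x\<in>pentablock. g x = fmap \<omega> \<eta> \<alpha> x))"
proof -
  have al: "cmod \<alpha> < 1" using a by (simp add: autD_param_def)
  define g where "g = fmap (cnj \<omega>) (cnj \<eta>) (- \<eta> * \<alpha>)"
  have a': "autD_param (cnj \<eta>) (- \<eta> * \<alpha>)" using params_inv[OF a] .
  have al': "cmod (- \<eta> * \<alpha>) < 1" using a' by (simp add: autD_param_def)
  have bij: "bij_betw (fmap \<omega> \<eta> \<alpha>) pentablock pentablock"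
  proof (rule bij_betw_byWitness[where f'=g])
    show "\<forall>x\<in>pentablock. g (fmap \<omega> \<eta> \<alpha> x) = x" using left_inv w a g_def by blast
    show "\<forall>x\<in>pentablock. fmap \<omega> \<eta> \<alpha> (g x) = x" using right_inv w a g_def by blast
    show "fmap \<omega> \<eta> \<alpha> ` pentablock \<subseteq> pentablock" using fmap_P w a by blast
    show "g ` pentablock \<subseteq> pentablock" using fmap_P[OF _ _ a'] w g_def by auto
  qed
  have h1: "holo3_on pentablock (fmap \<omega> \<eta> \<alpha>)"
    by (rule holo3_mono[OF fmap_holo]) (use dd_nz al in blast)
  have hg: "holo3_on pentablock g"
    unfolding g_def by (rule holo3_mono[OF fmap_holo]) (use dd_nz al' in blast)
  have h2: "holo3_on pentablock (inv_into pentablock (fmap \<omega> \<eta> \<alpha>))"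
    unfolding holo3_on_def
  proof
    fix x assume x: "x \<in> pentablock"
    obtain D where D: "(g has_derivative D) (at x)" "\<forall>c v. D (smul3 c v) = smul3 c (D v)"
      using hg x unfolding holo3_on_def by blast
    have "(inv_into pentablock (fmap \<omega> \<eta> \<alpha>) has_derivative D) (at x)"
      by (rule has_derivative_transform_within_open[OF D(1) pent_open x])
         (use inv_into_eq w a g_def in auto)
    then show "\<exists>D. (inv_into pentablock (fmap \<omega> \<eta> \<alpha>) has_derivative D) (at x) \<and>
        (\<forall>c v. D (smul3 c v) = smul3 c (D v))" using D(2) by blast
  qed
  have cont: "continuous_on UNIV (dd \<alpha>)" unfolding dd_def[abs_def] by (intro continuous_intros)
  have "closure pentablock \<subseteq> {x. (1 - cmod \<alpha>)^2 \<le> cmod (dd \<alpha> x)}"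
    by (rule closure_minimal) (use dd_pent al in \<open>auto intro!: closed_Collect_le continuous_intros cont\<close>)
  moreover have "(1 - cmod \<alpha>)^2 > 0" using al by simp
  ultimately have cl: "closure pentablock \<subseteq> {x. dd \<alpha> x \<noteq> 0}" by force
  have op: "open {x. dd \<alpha> x \<noteq> 0}" by (rule open_Collect_neq[OF cont continuous_on_const])
  show ?thesis using bij h1 h2 cl op fmap_holo unfolding is_aut3_def by blast
qed

theorem theorem7p1:
  shows
  "(\<forall>\<omega> \<eta> \<alpha>. norm \<omega> = 1 \<and> autD_param \<eta> \<alpha> \<longrightarrow>
       is_aut3 pentablock (fmap \<omega> \<eta> \<alpha>) \<and>
       (\<exists>U g. open U \<and> closure pentablock \<subseteq> U \<and> holo3_on U g \<and>
              (\<forall>x\<in>pentablock. g x = fmap \<omega> \<eta> \<alpha> x)))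
   \<and>
   (\<forall>\<omega>1 \<eta>1 \<alpha>1 \<omega>2 \<eta>2 \<alpha>2.
       norm \<omega>1 = 1 \<and> autD_param \<eta>1 \<alpha>1 \<and> norm \<omega>2 = 1 \<and> autD_param \<eta>2 \<alpha>2 \<longrightarrow>
       (\<exists>\<eta> \<alpha>. autD_param \<eta> \<alpha> \<and>
          (\<forall>z. norm z < 1 \<longrightarrow> moeb \<eta> \<alpha> z = moeb \<eta>1 \<alpha>1 (moeb \<eta>2 \<alpha>2 z))) \<and>
       (\<forall>\<eta> \<alpha>. autD_param \<eta> \<alpha> \<and>
          (\<forall>z. norm z < 1 \<longrightarrow> moeb \<eta> \<alpha> z = moeb \<eta>1 \<alpha>1 (moeb \<eta>2 \<alpha>2 z)) \<longrightarrow>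
          (\<forall>x\<in>pentablock. fmap \<omega>1 \<eta>1 \<alpha>1 (fmap \<omega>2 \<eta>2 \<alpha>2 x) = fmap (\<omega>1 * \<omega>2) \<eta> \<alpha> x)))
   \<and>
   (\<forall>\<omega> \<eta> \<alpha>. norm \<omega> = 1 \<and> autD_param \<eta> \<alpha> \<longrightarrow>
       (\<exists>\<eta>' \<alpha>'. autD_param \<eta>' \<alpha>' \<and>
          (\<forall>z. norm z < 1 \<longrightarrow> moeb \<eta>' \<alpha>' (moeb \<eta> \<alpha> z) = z)) \<and>
       (\<forall>\<eta>' \<alpha>'. autD_param \<eta>' \<alpha>' \<and>
          (\<forall>z. norm z < 1 \<longrightarrow> moeb \<eta>' \<alpha>' (moeb \<eta> \<alpha> z) = z) \<longrightarrow>
          (\<forall>x\<in>pentablock. inv_into pentablock (fmap \<omega> \<eta> \<alpha>) x = fmap (cnj \<omega>) \<eta>' \<alpha>' x)))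
   \<and>
   (\<forall>x\<in>pentablock. fmap 1 1 0 x = x)"
proof -
  have p1: "(\<forall>\<omega> \<eta> \<alpha>. norm \<omega> = 1 \<and> autD_param \<eta> \<alpha> \<longrightarrow>
       is_aut3 pentablock (fmap \<omega> \<eta> \<alpha>) \<and>
       (\<exists>U g. open U \<and> closure pentablock \<subseteq> U \<and> holo3_on U g \<and>
              (\<forall>x\<in>pentablock. g x = fmap \<omega> \<eta> \<alpha> x)))"
  proof (intro allI impI)
    fix \<omega> \<eta> \<alpha> :: complex
    assume h: "norm \<omega> = 1 \<and> autD_param \<eta> \<alpha>"
    then show "is_aut3 pentablock (fmap \<omega> \<eta> \<alpha>) \<and>
       (\<exists>U g. open U \<and> closure pentablock \<subseteq> U \<and> holo3_on U g \<and>
              (\<forall>x\<in>pentablock. g x = fmap \<omega> \<eta> \<alpha> x))" using part1 by blast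
  qed
  have p2: "(\<forall>\<omega>1 \<eta>1 \<alpha>1 \<omega>2 \<eta>2 \<alpha>2.
       norm \<omega>1 = 1 \<and> autD_param \<eta>1 \<alpha>1 \<and> norm \<omega>2 = 1 \<and> autD_param \<eta>2 \<alpha>2 \<longrightarrow>
       (\<exists>\<eta> \<alpha>. autD_param \<eta> \<alpha> \<and>
          (\<forall>z. norm z < 1 \<longrightarrow> moeb \<eta> \<alpha> z = moeb \<eta>1 \<alpha>1 (moeb \<eta>2 \<alpha>2 z))) \<and>
       (\<forall>\<eta> \<alpha>. autD_param \<eta> \<alpha> \<and>
          (\<forall>z. norm z < 1 \<longrightarrow> moeb \<eta> \<alpha> z = moeb \<eta>1 \<alpha>1 (moeb \<eta>2 \<alpha>2 z)) \<longrightarrow>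
          (\<forall>x\<in>pentablock. fmap \<omega>1 \<eta>1 \<alpha>1 (fmap \<omega>2 \<eta>2 \<alpha>2 x) = fmap (\<omega>1 * \<omega>2) \<eta> \<alpha> x)))"
  proof (intro allI impI)
    fix \<omega>1 \<eta>1 \<alpha>1 \<omega>2 \<eta>2 \<alpha>2 :: complex
    assume h: "norm \<omega>1 = 1 \<and> autD_param \<eta>1 \<alpha>1 \<and> norm \<omega>2 = 1 \<and> autD_param \<eta>2 \<alpha>2"
    then have a: "autD_param \<eta>1 \<alpha>1" "autD_param \<eta>2 \<alpha>2" by auto
    have q1: "\<exists>\<eta> \<alpha>. autD_param \<eta> \<alpha> \<and>
          (\<forall>z. norm z < 1 \<longrightarrow> moeb \<eta> \<alpha> z = moeb \<eta>1 \<alpha>1 (moeb \<eta>2 \<alpha>2 z))"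
      using autD3[OF a] moeb_comp[OF a] by blast
    have q2: "\<forall>\<eta> \<alpha>. autD_param \<eta> \<alpha> \<and>
          (\<forall>z. norm z < 1 \<longrightarrow> moeb \<eta> \<alpha> z = moeb \<eta>1 \<alpha>1 (moeb \<eta>2 \<alpha>2 z)) \<longrightarrow>
          (\<forall>x\<in>pentablock. fmap \<omega>1 \<eta>1 \<alpha>1 (fmap \<omega>2 \<eta>2 \<alpha>2 x) = fmap (\<omega>1 * \<omega>2) \<eta> \<alpha> x)"
    proof (intro allI impI ballI)
      fix \<eta> \<alpha> :: complex and x
      assume H: "autD_param \<eta> \<alpha> \<and> (\<forall>z. norm z < 1 \<longrightarrow> moeb \<eta> \<alpha> z = moeb \<eta>1 \<alpha>1 (moeb \<eta>2 \<alpha>2 z))"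
        and x: "x \<in> pentablock"
      have "\<eta> = eta3 \<eta>1 \<alpha>1 \<eta>2 \<alpha>2 \<and> \<alpha> = alpha3 \<eta>1 \<alpha>1 \<eta>2 \<alpha>2"
        by (rule moeb_uniq) (use H autD3[OF a] moeb_comp[OF a] in auto)
      then show "fmap \<omega>1 \<eta>1 \<alpha>1 (fmap \<omega>2 \<eta>2 \<alpha>2 x) = fmap (\<omega>1 * \<omega>2) \<eta> \<alpha> x"
        using comp_P[OF x a] by simp
    qed
    show "(\<exists>\<eta> \<alpha>. autD_param \<eta> \<alpha> \<and>
          (\<forall>z. norm z < 1 \<longrightarrow> moeb \<eta> \<alpha> z = moeb \<eta>1 \<alpha>1 (moeb \<eta>2 \<alpha>2 z))) \<and>
       (\<forall>\<eta> \<alpha>. autD_param \<eta> \<alpha> \<and>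
          (\<forall>z. norm z < 1 \<longrightarrow> moeb \<eta> \<alpha> z = moeb \<eta>1 \<alpha>1 (moeb \<eta>2 \<alpha>2 z)) \<longrightarrow>
          (\<forall>x\<in>pentablock. fmap \<omega>1 \<eta>1 \<alpha>1 (fmap \<omega>2 \<eta>2 \<alpha>2 x) = fmap (\<omega>1 * \<omega>2) \<eta> \<alpha> x))"
      using q1 q2 by (rule conjI)
  qed
  have p3: "(\<forall>\<omega> \<eta> \<alpha>. norm \<omega> = 1 \<and> autD_param \<eta> \<alpha> \<longrightarrow>
       (\<exists>\<eta>' \<alpha>'. autD_param \<eta>' \<alpha>' \<and>
          (\<forall>z. norm z < 1 \<longrightarrow> moeb \<eta>' \<alpha>' (moeb \<eta> \<alpha> z) = z)) \<and>
       (\<forall>\<eta>' \<alpha>'. autD_param \<eta>' \<alpha>' \<and>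
          (\<forall>z. norm z < 1 \<longrightarrow> moeb \<eta>' \<alpha>' (moeb \<eta> \<alpha> z) = z) \<longrightarrow>
          (\<forall>x\<in>pentablock. inv_into pentablock (fmap \<omega> \<eta> \<alpha>) x = fmap (cnj \<omega>) \<eta>' \<alpha>' x)))"
  proof (intro allI impI)
    fix \<omega> \<eta> \<alpha> :: complex
    assume h: "norm \<omega> = 1 \<and> autD_param \<eta> \<alpha>"
    then have w: "cmod \<omega> = 1" and a: "autD_param \<eta> \<alpha>" by auto
    have a': "autD_param (cnj \<eta>) (- \<eta> * \<alpha>)" using params_inv[OF a] .
    have linv: "moeb (cnj \<eta>) (- \<eta> * \<alpha>) (moeb \<eta> \<alpha> z) = z" if "cmod z < 1" for z
      using moeb_comp[OF a' a that] inv_eta3[OF a] moeb_id by simp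
    have rinv: "moeb \<eta> \<alpha> (moeb (cnj \<eta>) (- \<eta> * \<alpha>) z) = z" if "cmod z < 1" for z
      using moeb_comp[OF a a' that] inv_eta3'[OF a] moeb_id by simp
    have q1: "\<exists>\<eta>' \<alpha>'. autD_param \<eta>' \<alpha>' \<and> (\<forall>z. norm z < 1 \<longrightarrow> moeb \<eta>' \<alpha>' (moeb \<eta> \<alpha> z) = z)"
      using a' linv by blast
    have q2: "\<forall>\<eta>' \<alpha>'. autD_param \<eta>' \<alpha>' \<and>
          (\<forall>z. norm z < 1 \<longrightarrow> moeb \<eta>' \<alpha>' (moeb \<eta> \<alpha> z) = z) \<longrightarrow>
          (\<forall>x\<in>pentablock. inv_into pentablock (fmap \<omega> \<eta> \<alpha>) x = fmap (cnj \<omega>) \<eta>' \<alpha>' x)"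
    proof (intro allI impI ballI)
      fix \<eta>' \<alpha>' :: complex and x
      assume H: "autD_param \<eta>' \<alpha>' \<and> (\<forall>z. norm z < 1 \<longrightarrow> moeb \<eta>' \<alpha>' (moeb \<eta> \<alpha> z) = z)"
        and x: "x \<in> pentablock"
      have "\<forall>z. cmod z < 1 \<longrightarrow> moeb \<eta>' \<alpha>' z = moeb (cnj \<eta>) (- \<eta> * \<alpha>) z"
      proof (intro allI impI)
        fix z :: complex assume z: "cmod z < 1"
        have wz: "cmod (moeb (cnj \<eta>) (- \<eta> * \<alpha>) z) < 1" using moeb_in[OF a' z] .
        have "moeb \<eta>' \<alpha>' z = moeb \<eta>' \<alpha>' (moeb \<eta> \<alpha> (moeb (cnj \<eta>) (- \<eta> * \<alpha>) z))" using rinv[OF z] by simp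
        also have "\<dots> = moeb (cnj \<eta>) (- \<eta> * \<alpha>) z" using H wz by blast
        finally show "moeb \<eta>' \<alpha>' z = moeb (cnj \<eta>) (- \<eta> * \<alpha>) z" .
      qed
      then have "\<eta>' = cnj \<eta> \<and> \<alpha>' = - \<eta> * \<alpha>" using moeb_uniq[OF _ a'] H by blast
      then show "inv_into pentablock (fmap \<omega> \<eta> \<alpha>) x = fmap (cnj \<omega>) \<eta>' \<alpha>' x"
        using inv_into_eq[OF x w a] by simp
    qed
    show "(\<exists>\<eta>' \<alpha>'. autD_param \<eta>' \<alpha>' \<and>
          (\<forall>z. norm z < 1 \<longrightarrow> moeb \<eta>' \<alpha>' (moeb \<eta> \<alpha> z) = z)) \<and>
       (\<forall>\<eta>' \<alpha>'. autD_param \<eta>' \<alpha>' \<and>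
          (\<forall>z. norm z < 1 \<longrightarrow> moeb \<eta>' \<alpha>' (moeb \<eta> \<alpha> z) = z) \<longrightarrow>
          (\<forall>x\<in>pentablock. inv_into pentablock (fmap \<omega> \<eta> \<alpha>) x = fmap (cnj \<omega>) \<eta>' \<alpha>' x))"
      using q1 q2 by (rule conjI)
  qed
  have p4: "(\<forall>x\<in>pentablock. fmap 1 1 0 x = x)" using fmap_id by blast
  show ?thesis by (intro conjI[OF p1] conjI[OF p2] conjI[OF p3] p4)
qed


end
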